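(* The function $\Delta$ satisfies $|\Delta(x)-\Delta(y)|\le 2|x-y|$ for all $x,y\in(0,1]$; in particular $\Delta$ is continuous on $(0,1]$. Furthermore, the function $\varepsilon\mapsto \Delta(\varepsilon)/\varepsilon^2$ is increasing on $(0,1]$, and hence $\lim_{\varepsilon\to0^+}\Delta(\varepsilon)/\varepsilon^2$ exists.
   Context: Let $\lambda$ denote Lebesgue measure on $\mathbb{R}$. A set $C\subseteq\mathbb{R}$ is symmetric if there is a number $c$ such that $c+x\in C$ if and only if $c-x\in C$. For a measurable $A\subseteq\mathbb{R}$ let $D(A):=\sup\{\lambda(C): C\subseteq A,\ C \text{ measurable and symmetric}\}$. For $0\le\varepsilon\le1$ let $\Delta(\varepsilon):=\inf\{D(A): A\subseteq[0,1) \text{ measurable},\ \lambda(A)=\varepsilon\}$ (equivalently, the supremum of $\delta$ such that every measurable subset of $[0,1)$ of measure $\varepsilon$ contains a symmetric subset of measure $\delta$). *)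

theory Defs
  imports "HOL-Analysis.Analysis"
begin

definition symmetric_set :: "real set \<Rightarrow> bool" where
  "symmetric_set C \<longleftrightarrow> (\<exists>c. \<forall>x. c + x \<in> C \<longleftrightarrow> c - x \<in> C)"

definition D :: "real set \<Rightarrow> real" where
  "D A = Sup {measure lebesgue C | C. C \<subseteq> A \<and> C \<in> sets lebesgue \<and> symmetric_set C}"

definition Delta :: "real \<Rightarrow> real" where
  "Delta \<epsilon> = Inf {D A | A. A \<subseteq> {0..<1} \<and> A \<in> sets lebesgue \<and> measure lebesgue A = \<epsilon>}"

end

theory Submission
  imports Defs "HOL-Number_Theory.Number_Theory"
begin

lemma refl_eq: "{x::real. t - x \<in> X} = (\<lambda>x. t + (-1) *\<^sub>R x) ` X"
proof -
  have "x \<in> (\<lambda>x. t + (-1) *\<^sub>R x) ` X" if "t - x \<in> X" for x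
    using that by (intro image_eqI[of _ _ "t - x"]) auto
  then show ?thesis by auto
qed

lemma refl_measure: "measure lebesgue {x::real. t - x \<in> X} = measure lebesgue X"
  unfolding refl_eq using measure_lebesgue_affine[of "-1" t X] by (simp add: add.commute)

lemma refl_sets:
  assumes "X \<in> sets lebesgue" shows "{x::real. t - x \<in> X} \<in> sets lebesgue"
proof -
  have m: "(\<lambda>x::real. t - x) \<in> lebesgue \<rightarrow>\<^sub>M lebesgue"
    using lebesgue_affine_measurable[where c="\<lambda>_. -1::real" and t=t] by simp
  have "(\<lambda>x::real. t - x) -` X \<inter> space lebesgue \<in> sets lebesgue"
    using measurable_sets[OF m assms] .
  then show ?thesis by (simp add: vimage_def)
qed

lemma transl_sets:
  assumes "X \<in> sets lebesgue" shows "((+) (a::real) ` X) \<in> sets lebesgue"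
  using lebesgue_sets_translation[OF assms] by simp

lemma sub01_lmeas: "A \<subseteq> {0..<1::real} \<Longrightarrow> A \<in> sets lebesgue \<Longrightarrow> A \<in> lmeasurable"
proof -
  assume a: "A \<subseteq> {0..<1::real}" "A \<in> sets lebesgue"
  have "A \<subseteq> cbox 0 1" using a by auto
  then show ?thesis by (rule fmeasurableI2[OF lmeasurable_cbox[of 0 1]]) (use a in auto)
qed

lemma sub01_le1: "A \<subseteq> {0..<1::real} \<Longrightarrow> A \<in> sets lebesgue \<Longrightarrow> measure lebesgue A \<le> 1"
proof -
  assume a: "A \<subseteq> {0..<1::real}" "A \<in> sets lebesgue"
  have "A \<subseteq> cbox 0 1" using a by auto
  then have "measure lebesgue A \<le> measure lebesgue (cbox (0::real) 1)"
    by (rule measure_mono_fmeasurable[OF _ a(2) lmeasurable_cbox])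
  then show ?thesis by simp
qed

lemma sym_sub:
  assumes "symmetric_set C" "C \<subseteq> A"
  shows "\<exists>t. C \<subseteq> A \<inter> {x. t - x \<in> A}"
proof -
  obtain c where c: "\<And>x. c + x \<in> C \<longleftrightarrow> c - x \<in> C" using assms(1) unfolding symmetric_set_def by blast
  have "x \<in> A \<inter> {x. 2*c - x \<in> A}" if "x \<in> C" for x
  proof -
    have "c + (x - c) \<in> C" using that by simp
    then have "c - (x - c) \<in> C" using c by blast
    moreover have "c - (x - c) = 2*c - x" by simp
    ultimately have "2*c - x \<in> A" using assms(2) by auto
    then show ?thesis using that assms(2) by auto
  qed
  then show ?thesis by (intro exI[of _ "2*c"]) auto
qed

lemma refl_symmetric: "symmetric_set (A \<inter> {x::real. t - x \<in> A})"
  unfolding symmetric_set_def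
proof (rule exI[of _ "t/2"], intro allI)
  fix x
  have "t - (t/2 + x) = t/2 - x" "t - (t/2 - x) = t/2 + x" by simp_all
  then show "(t/2 + x \<in> A \<inter> {x. t - x \<in> A}) = (t/2 - x \<in> A \<inter> {x. t - x \<in> A})" by auto
qed

lemma D_upper:
  assumes "A \<subseteq> {0..<1::real}" "A \<in> sets lebesgue"
  shows "measure lebesgue (A \<inter> {x. t - x \<in> A}) \<le> D A"
proof -
  let ?S = "{measure lebesgue C | C. C \<subseteq> A \<and> C \<in> sets lebesgue \<and> symmetric_set C}"
  have bdd: "bdd_above ?S"
  proof (rule bdd_aboveI[of _ 1])
    fix y assume "y \<in> ?S"
    then obtain C where "y = measure lebesgue C" "C \<subseteq> A" "C \<in> sets lebesgue" by blast
    then show "y \<le> 1" using sub01_le1[of C] assms by auto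
  qed
  have "A \<inter> {x. t - x \<in> A} \<in> sets lebesgue" using assms refl_sets by blast
  then have "measure lebesgue (A \<inter> {x. t - x \<in> A}) \<in> ?S"
    using refl_symmetric[of A t] by (intro CollectI exI[of _ "A \<inter> {x. t - x \<in> A}"]) auto
  then show ?thesis unfolding D_def using bdd by (rule cSup_upper)
qed

lemma D_least:
  assumes "A \<subseteq> {0..<1::real}" "A \<in> sets lebesgue"
    and "\<And>t. measure lebesgue (A \<inter> {x. t - x \<in> A}) \<le> X"
  shows "D A \<le> X"
  unfolding D_def
proof (rule cSup_least)
  have "symmetric_set {}" unfolding symmetric_set_def by auto
  then have "measure lebesgue {} \<in> {measure lebesgue C | C. C \<subseteq> A \<and> C \<in> sets lebesgue \<and> symmetric_set C}"
    by (intro CollectI exI[of _ "{}"]) simp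
  then show "{measure lebesgue C | C. C \<subseteq> A \<and> C \<in> sets lebesgue \<and> symmetric_set C} \<noteq> {}"
    by (metis empty_iff)
next
  fix y assume "y \<in> {measure lebesgue C | C. C \<subseteq> A \<and> C \<in> sets lebesgue \<and> symmetric_set C}"
  then obtain C where C: "y = measure lebesgue C" "C \<subseteq> A" "C \<in> sets lebesgue" "symmetric_set C" by blast
  obtain t where t: "C \<subseteq> A \<inter> {x. t - x \<in> A}" using sym_sub[OF C(4,2)] by blast
  have "A \<inter> {x. t - x \<in> A} \<in> sets lebesgue" using assms refl_sets by blast
  then have "A \<inter> {x. t - x \<in> A} \<in> lmeasurable" using sub01_lmeas[of "A \<inter> {x. t - x \<in> A}"] assms by auto
  then have "measure lebesgue C \<le> measure lebesgue (A \<inter> {x. t - x \<in> A})"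
    using t C(3) by (intro measure_mono_fmeasurable) auto
  then show "y \<le> X" using assms(3)[of t] C(1) by linarith
qed

lemma D_nonneg:
  assumes "A \<subseteq> {0..<1::real}" "A \<in> sets lebesgue"
  shows "0 \<le> D A"
  using D_upper[OF assms, of 0] by (meson measure_nonneg order_trans)

lemma D_le1:
  assumes "A \<subseteq> {0..<1::real}" "A \<in> sets lebesgue"
  shows "D A \<le> 1"
proof (rule D_least[OF assms])
  fix t show "measure lebesgue (A \<inter> {x. t - x \<in> A}) \<le> 1"
    using assms refl_sets[OF assms(2), of t] by (intro sub01_le1) auto
qed

lemma Delta_lower:
  assumes "A \<subseteq> {0..<1::real}" "A \<in> sets lebesgue" "measure lebesgue A = e"
  shows "Delta e \<le> D A"
  unfolding Delta_def
proof (rule cInf_lower)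
  show "D A \<in> {D A |A. A \<subseteq> {0..<1} \<and> A \<in> sets lebesgue \<and> measure lebesgue A = e}"
    using assms by (intro CollectI exI[of _ A]) auto
  show "bdd_below {D A |A. A \<subseteq> {0..<1} \<and> A \<in> sets lebesgue \<and> measure lebesgue A = e}"
    by (rule bdd_belowI[of _ 0]) (auto intro: D_nonneg)
qed

lemma Delta_greatest:
  assumes "0 \<le> e" "e \<le> 1"
    and "\<And>A. A \<subseteq> {0..<1::real} \<Longrightarrow> A \<in> sets lebesgue \<Longrightarrow> measure lebesgue A = e \<Longrightarrow> X \<le> D A"
  shows "X \<le> Delta e"
  unfolding Delta_def
proof (rule cInf_greatest)
  have "{0..<e} \<subseteq> {0..<1::real}" "{0..<e} \<in> sets lebesgue" "measure lebesgue {0..<e} = e"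
    using assms by auto
  then have "D {0..<e} \<in> {D A |A. A \<subseteq> {0..<1} \<and> A \<in> sets lebesgue \<and> measure lebesgue A = e}"
    by (intro CollectI exI[of _ "{0..<e}"]) simp
  then show "{D A |A. A \<subseteq> {0..<1} \<and> A \<in> sets lebesgue \<and> measure lebesgue A = e} \<noteq> {}"
    by (metis empty_iff)
next
  fix x assume "x \<in> {D A |A. A \<subseteq> {0..<1} \<and> A \<in> sets lebesgue \<and> measure lebesgue A = e}"
  then show "X \<le> x" using assms(3) by auto
qed

lemma Delta_nonneg: assumes "0 \<le> e" "e \<le> 1" shows "0 \<le> Delta e"
proof (rule Delta_greatest[OF assms])
  fix A assume "A \<subseteq> {0..<1::real}" "A \<in> sets lebesgue"
  then show "0 \<le> D A" by (rule D_nonneg)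
qed


lemma msub: "X \<in> lmeasurable \<Longrightarrow> Y \<in> lmeasurable \<Longrightarrow>
   measure lebesgue (X \<union> Y) \<le> measure lebesgue X + measure lebesgue Y"
  by (rule measure_subadditive) (auto simp: fmeasurable_def)

lemma refl_lmeas: assumes "X \<in> lmeasurable" shows "{x::real. t - x \<in> X} \<in> lmeasurable"
proof -
  have "emeasure lebesgue {x::real. t - x \<in> X} = emeasure lebesgue X"
    unfolding refl_eq using emeasure_lebesgue_affine[of "-1" t X] by (simp add: add.commute)
  then show ?thesis using assms refl_sets[of X t] by (auto simp: fmeasurable_def)
qed

lemma sub_measure:
  assumes A: "A \<subseteq> {0..<1::real}" "A \<in> sets lebesgue" and y: "0 \<le> y" "y \<le> measure lebesgue A"
  shows "\<exists>A'. A' \<subseteq> A \<and> A' \<in> sets lebesgue \<and> measure lebesgue A' = y"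
proof -
  define g where "g s = measure lebesgue (A \<inter> {..<s})" for s :: real
  have Am: "A \<in> lmeasurable" using sub01_lmeas A by blast
  have gs: "A \<inter> {..<s} \<in> lmeasurable" for s
    by (rule fmeasurableI2[OF Am]) (use A in auto)
  have lip: "g s' \<le> g s + (s' - s)" if "s \<le> s'" for s s'
  proof -
    have "A \<inter> {..<s'} \<subseteq> (A \<inter> {..<s}) \<union> {s..s'}" by auto
    then have "g s' \<le> measure lebesgue ((A \<inter> {..<s}) \<union> {s..s'})"
      unfolding g_def
      by (rule measure_mono_fmeasurable) (use gs A in auto)
    also have "\<dots> \<le> g s + measure lebesgue {s..s'}"
      unfolding g_def by (rule msub) (use gs in auto)
    finally show ?thesis using that by simp
  qed
  have mono: "g s \<le> g s'" if "s \<le> s'" for s s'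
  proof -
    have "A \<inter> {..<s} \<subseteq> A \<inter> {..<s'}" using that by auto
    then show ?thesis unfolding g_def
      by (rule measure_mono_fmeasurable) (use gs in auto)
  qed
  have cont: "continuous_on {0..1} g"
    unfolding continuous_on_iff
  proof (intro ballI allI impI)
    fix x e assume "x \<in> {0..1::real}" "0 < (e::real)"
    show "\<exists>d>0. \<forall>x'\<in>{0..1}. dist x' x < d \<longrightarrow> dist (g x') (g x) < e"
    proof (intro exI[of _ e] conjI ballI impI)
      fix x' assume "x' \<in> {0..1::real}" "dist x' x < e"
      then show "dist (g x') (g x) < e"
        using lip[of x x'] lip[of x' x] mono[of x x'] mono[of x' x]
        by (cases "x \<le> x'") (auto simp: dist_real_def abs_if split: if_splits)
    qed (use \<open>0 < e\<close> in auto)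
  qed
  have g0: "g 0 = 0"
  proof -
    have "A \<inter> {..<0} = {}" using A by auto
    then show ?thesis unfolding g_def by simp
  qed
  have g1: "g 1 = measure lebesgue A"
  proof -
    have "A \<inter> {..<1} = A" using A by auto
    then show ?thesis unfolding g_def by simp
  qed
  obtain s where "0 \<le> s" "s \<le> 1" "g s = y"
    using IVT'[of g 0 y 1] cont g0 g1 y by auto
  then show ?thesis unfolding g_def
    by (intro exI[of _ "A \<inter> {..<s}"]) (use gs in auto)
qed

lemma D_mono:
  assumes A: "A \<subseteq> {0..<1::real}" "A \<in> sets lebesgue" and B: "B \<subseteq> A" "B \<in> sets lebesgue"
  shows "D B \<le> D A"
proof (rule D_least)
  show "B \<subseteq> {0..<1}" using A B by auto
  show "B \<in> sets lebesgue" by fact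
  fix t
  have "B \<inter> {x. t - x \<in> B} \<subseteq> A \<inter> {x. t - x \<in> A}" using B by auto
  then have "measure lebesgue (B \<inter> {x. t - x \<in> B}) \<le> measure lebesgue (A \<inter> {x. t - x \<in> A})"
    by (rule measure_mono_fmeasurable)
       (use A B refl_sets sub01_lmeas[of "A \<inter> {x. t - x \<in> A}"] in auto)
  also have "\<dots> \<le> D A" by (rule D_upper[OF A])
  finally show "measure lebesgue (B \<inter> {x. t - x \<in> B}) \<le> D A" .
qed

lemma super_measure:
  assumes A: "A \<subseteq> {0..<1::real}" "A \<in> sets lebesgue" and x: "measure lebesgue A \<le> x" "x \<le> 1"
  shows "\<exists>A'. A \<subseteq> A' \<and> A' \<subseteq> {0..<1} \<and> A' \<in> sets lebesgue \<and> measure lebesgue A' = x \<and>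
     D A' \<le> D A + 2 * (x - measure lebesgue A)"
proof -
  have Am: "A \<in> lmeasurable" using sub01_lmeas A by blast
  have cm: "{0..<1::real} - A \<in> sets lebesgue" using A by auto
  have "measure lebesgue ({0..<1::real} - A) = measure lebesgue {0..<1::real} - measure lebesgue A"
    by (rule measure_Diff) (use A in auto)
  then have mc: "measure lebesgue ({0..<1::real} - A) = 1 - measure lebesgue A" by simp
  obtain W where W: "W \<subseteq> {0..<1} - A" "W \<in> sets lebesgue" "measure lebesgue W = x - measure lebesgue A"
    using sub_measure[of "{0..<1} - A" "x - measure lebesgue A"] cm mc x by auto
  have Wm: "W \<in> lmeasurable" using sub01_lmeas W by auto
  define A' where "A' = A \<union> W"
  have A'1: "A' \<subseteq> {0..<1}" "A' \<in> sets lebesgue" using A W unfolding A'_def by auto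
  have mA': "measure lebesgue A' = x"
  proof -
    have "A \<inter> W = {}" using W(1) by auto
    then show ?thesis unfolding A'_def using measure_Un3[OF Am Wm] W(3) by simp
  qed
  have "D A' \<le> D A + 2 * (x - measure lebesgue A)"
  proof (rule D_least[OF A'1])
    fix t
    have R: "{x. t - x \<in> W} \<in> lmeasurable" by (rule refl_lmeas[OF Wm])
    have E: "A \<inter> {x. t - x \<in> A} \<in> lmeasurable"
      by (rule sub01_lmeas) (use A refl_sets[OF A(2)] in auto)
    have "A' \<inter> {x. t - x \<in> A'} \<subseteq> ((A \<inter> {x. t - x \<in> A}) \<union> W) \<union> {x. t - x \<in> W}"
      unfolding A'_def by auto
    then have "measure lebesgue (A' \<inter> {x. t - x \<in> A'}) \<le>
        measure lebesgue (((A \<inter> {x. t - x \<in> A}) \<union> W) \<union> {x. t - x \<in> W})"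
      by (rule measure_mono_fmeasurable) (use A'1 refl_sets R E Wm in auto)
    also have "\<dots> \<le> measure lebesgue ((A \<inter> {x. t - x \<in> A}) \<union> W) + measure lebesgue {x. t - x \<in> W}"
      by (rule msub) (use R E Wm in auto)
    also have "\<dots> \<le> measure lebesgue (A \<inter> {x. t - x \<in> A}) + measure lebesgue W + measure lebesgue W"
      using msub[OF E Wm] refl_measure[of t W] by linarith
    also have "\<dots> \<le> D A + 2 * (x - measure lebesgue A)"
      using D_upper[OF A, of t] W(3) by (smt (verit))
    finally show "measure lebesgue (A' \<inter> {x. t - x \<in> A'}) \<le> D A + 2 * (x - measure lebesgue A)" .
  qed
  then show ?thesis using A'1 mA' unfolding A'_def by auto
qed

lemma Delta_lip:
  assumes "0 \<le> y" "y \<le> x" "x \<le> 1"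
  shows "Delta y \<le> Delta x" "Delta x \<le> Delta y + 2 * (x - y)"
proof -
  show "Delta y \<le> Delta x"
  proof (rule Delta_greatest)
    fix A assume A: "A \<subseteq> {0..<1::real}" "A \<in> sets lebesgue" "measure lebesgue A = x"
    obtain A' where A': "A' \<subseteq> A" "A' \<in> sets lebesgue" "measure lebesgue A' = y"
      using sub_measure[OF A(1,2), of y] assms A(3) by auto
    have "Delta y \<le> D A'" by (rule Delta_lower) (use A A' in auto)
    also have "\<dots> \<le> D A" by (rule D_mono) (use A A' in auto)
    finally show "Delta y \<le> D A" .
  qed (use assms in auto)
  have "Delta x - 2 * (x - y) \<le> Delta y"
  proof (rule Delta_greatest)
    fix A assume A: "A \<subseteq> {0..<1::real}" "A \<in> sets lebesgue" "measure lebesgue A = y"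
    obtain A' where A': "A \<subseteq> A'" "A' \<subseteq> {0..<1}" "A' \<in> sets lebesgue" "measure lebesgue A' = x"
       "D A' \<le> D A + 2 * (x - measure lebesgue A)"
      using super_measure[OF A(1,2), of x] assms A(3) by auto
    have "Delta x \<le> D A'" by (rule Delta_lower) (use A' in auto)
    moreover have "D A' \<le> D A + 2 * (x - y)" using A'(5) A(3) by simp
    ultimately show "Delta x - 2 * (x - y) \<le> D A" by linarith
  qed (use assms in auto)
  then show "Delta x \<le> Delta y + 2 * (x - y)" by linarith
qed

lemma Delta_lip_abs:
  assumes "0 \<le> x" "x \<le> 1" "0 \<le> y" "y \<le> 1"
  shows "\<bar>Delta x - Delta y\<bar> \<le> 2 * \<bar>x - y\<bar>"
proof (cases "y \<le> x")
  case True
  then show ?thesis using Delta_lip[of y x] assms by auto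
next
  case False
  then show ?thesis using Delta_lip[of x y] assms by auto
qed


lemma meas_lt: "X \<in> lmeasurable \<Longrightarrow> emeasure lebesgue X < ennreal e \<Longrightarrow> measure lebesgue X < e"
  by (metis emeasure_eq_measure2 ennreal_less_iff measure_nonneg)

lemma transl_eq: "(+) (a::real) ` X = {y. y - a \<in> X}"
proof -
  have "y \<in> (+) a ` X" if "y - a \<in> X" for y
    using that by (intro image_eqI[of _ _ "y - a"]) auto
  then show ?thesis by auto
qed

lemma transl_lmeas: "X \<in> lmeasurable \<Longrightarrow> (+) (a::real) ` X \<in> lmeasurable"
  by (rule measurable_translation)

lemma transl_measure: "measure lebesgue ((+) (a::real) ` X) = measure lebesgue X"
  by (rule measure_translation)

lemma trans_cont:
  assumes A: "A \<in> lmeasurable" "bounded A" and e: "e > 0"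
  shows "\<exists>d>0. \<forall>s::real. \<bar>s\<bar> < d \<longrightarrow> measure lebesgue (((+) s ` A) - A) < e"
proof -
  have e2: "e/2 > 0" using e by simp
  obtain G where G: "open G" "A \<subseteq> G" "(G - A) \<in> lmeasurable" "emeasure lebesgue (G - A) < ennreal (e/2)"
    using sets_lebesgue_outer_open[OF fmeasurableD[OF A(1)] e2] by blast
  obtain T where T: "closed T" "T \<subseteq> A" "(A - T) \<in> lmeasurable" "emeasure lebesgue (A - T) < ennreal (e/2)"
    using sets_lebesgue_inner_closed[OF fmeasurableD[OF A(1)] e2] by blast
  have "compact T" using T(1,2) A(2) bounded_subset compact_eq_bounded_closed by blast
  moreover have "closed (- G)" using G(1) by auto
  moreover have "T \<inter> (- G) = {}" using T(2) G(2) by auto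
  ultimately obtain d where d: "d > 0" "\<And>x y. x \<in> T \<Longrightarrow> y \<in> - G \<Longrightarrow> d \<le> dist x y"
    using separate_compact_closed[of T "- G"] by blast
  have mG: "measure lebesgue (G - A) < e/2" by (rule meas_lt[OF G(3,4)])
  have mT: "measure lebesgue (A - T) < e/2" by (rule meas_lt[OF T(3,4)])
  show ?thesis
  proof (intro exI[of _ d] conjI allI impI)
    show "d > 0" by fact
    fix s :: real assume s: "\<bar>s\<bar> < d"
    have sub: "((+) s ` A) - A \<subseteq> (G - A) \<union> ((+) s ` (A - T))"
    proof
      fix x assume x: "x \<in> ((+) s ` A) - A"
      then obtain a where a: "a \<in> A" "x = s + a" by auto
      show "x \<in> (G - A) \<union> ((+) s ` (A - T))"
      proof (cases "a \<in> T")
        case True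
        have "x \<in> G"
        proof (rule ccontr)
          assume "x \<notin> G"
          then have "d \<le> dist a x" using d(2)[OF True] by auto
          then show False using s a by (simp add: dist_real_def)
        qed
        then show ?thesis using x by auto
      next
        case False
        then show ?thesis using a by auto
      qed
    qed
    have L1: "(+) s ` (A - T) \<in> lmeasurable" by (rule transl_lmeas[OF T(3)])
    have L2: "((+) s ` A) - A \<in> sets lebesgue"
      using transl_sets[OF fmeasurableD[OF A(1)]] fmeasurableD[OF A(1)] by auto
    have "measure lebesgue (((+) s ` A) - A) \<le> measure lebesgue ((G - A) \<union> ((+) s ` (A - T)))"
      by (rule measure_mono_fmeasurable[OF sub L2]) (use G(3) L1 in auto)
    also have "\<dots> \<le> measure lebesgue (G - A) + measure lebesgue ((+) s ` (A - T))"
      by (rule msub[OF G(3) L1])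
    also have "\<dots> = measure lebesgue (G - A) + measure lebesgue (A - T)"
      by (simp add: transl_measure)
    also have "\<dots> < e" using mG mT by simp
    finally show "measure lebesgue (((+) s ` A) - A) < e" .
  qed
qed

definition pat :: "nat \<Rightarrow> (int \<Rightarrow> bool) \<Rightarrow> nat \<Rightarrow> nat \<Rightarrow> bool" where
  "pat m s K M \<longleftrightarrow> m > 0 \<and> (\<forall>x. s (x mod int m) = s x) \<and> card {x\<in>{0..<int m}. s x} = K \<and>
     (\<forall>j. card {x\<in>{0..<int m}. s x \<and> s (j - x)} \<le> M)"

lemma window:
  assumes m: "m > 0" and R: "\<And>y. R (y mod int m) = R y"
  shows "card {y\<in>{a..<a + int m}. R y} = card {y\<in>{0..<int m}. R y}"
proof (rule bij_betw_same_card[of "\<lambda>y. y mod int m"])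
  show "bij_betw (\<lambda>y. y mod int m) {y\<in>{a..<a + int m}. R y} {y\<in>{0..<int m}. R y}"
    unfolding bij_betw_def
  proof
    show "inj_on (\<lambda>y. y mod int m) {y\<in>{a..<a + int m}. R y}"
    proof (rule inj_onI)
      fix x y assume x: "x \<in> {y\<in>{a..<a + int m}. R y}" and y: "y \<in> {y\<in>{a..<a + int m}. R y}"
        and eq: "x mod int m = y mod int m"
      then have "int m dvd (x - y)" by (simp add: mod_eq_dvd_iff)
      then obtain q where q: "x - y = int m * q" by blast
      have "\<bar>x - y\<bar> < int m" using x y by auto
      then have "\<bar>q\<bar> < 1" using q m by (simp add: abs_mult)
      then have "q = 0" by simp
      then show "x = y" using q by simp
    qed
    show "(\<lambda>y. y mod int m) ` {y\<in>{a..<a + int m}. R y} = {y\<in>{0..<int m}. R y}"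
    proof (intro equalityI subsetI)
      fix z assume "z \<in> (\<lambda>y. y mod int m) ` {y\<in>{a..<a + int m}. R y}"
      then obtain y where "y \<in> {y\<in>{a..<a + int m}. R y}" "z = y mod int m" by blast
      then show "z \<in> {y\<in>{0..<int m}. R y}" using m R[of y] by auto
    next
      fix z assume z: "z \<in> {y\<in>{0..<int m}. R y}"
      define y where "y = a + (z - a) mod int m"
      have "y mod int m = (a + (z - a)) mod int m" unfolding y_def by (simp add: mod_add_right_eq)
      also have "\<dots> = z" using z by simp
      finally have yz: "y mod int m = z" .
      have "y \<in> {y\<in>{a..<a + int m}. R y}" using m R[of y] yz z unfolding y_def by auto
      then show "z \<in> (\<lambda>y. y mod int m) ` {y\<in>{a..<a + int m}. R y}" using yz by force
    qed
  qed
qed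

lemma shift_count:
  assumes m: "m > 0" and R: "\<And>y. R (y mod int m) = R y"
  shows "card {k\<in>{..<m}. R (c + int k)} = card {y\<in>{0..<int m}. R y}"
proof -
  have "{y\<in>{c..<c + int m}. R y} = (\<lambda>k. c + int k) ` {k\<in>{..<m}. R (c + int k)}"
  proof (intro equalityI subsetI)
    fix y assume y: "y \<in> {y\<in>{c..<c + int m}. R y}"
    then have "y = c + int (nat (y - c))" "nat (y - c) \<in> {k\<in>{..<m}. R (c + int k)}" by auto
    then show "y \<in> (\<lambda>k. c + int k) ` {k\<in>{..<m}. R (c + int k)}" by blast
  qed auto
  moreover have "inj_on (\<lambda>k. c + int k) {k\<in>{..<m}. R (c + int k)}" by (auto intro: inj_onI)
  ultimately have "card {y\<in>{c..<c + int m}. R y} = card {k\<in>{..<m}. R (c + int k)}"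
    by (simp add: card_image)
  then show ?thesis using window[of m R c, OF m R] by simp
qed

lemma pat_count1:
  assumes "pat m s K M"
  shows "card {k\<in>{..<m}. s (c + int k)} = K"
  using assms shift_count[of m s c] unfolding pat_def by auto

lemma pat_count2:
  assumes "pat m s K M"
  shows "card {k\<in>{..<m}. s (c + int k) \<and> s (c' - int k)} \<le> M"
proof -
  have m: "m > 0" and per: "\<And>x. s (x mod int m) = s x" and cM: "\<And>j. card {x\<in>{0..<int m}. s x \<and> s (j - x)} \<le> M"
    using assms unfolding pat_def by auto
  define R where "R y = (s y \<and> s ((c + c') - y))" for y
  have R: "R (y mod int m) = R y" for y
  proof -
    have "s ((c + c') - y mod int m) = s (((c + c') - y mod int m) mod int m)" using per by simp
    also have "((c + c') - y mod int m) mod int m = ((c + c') - y) mod int m" by (simp add: mod_diff_right_eq)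
    also have "s \<dots> = s ((c + c') - y)" using per by simp
    finally show ?thesis unfolding R_def using per by simp
  qed
  have "{k\<in>{..<m}. s (c + int k) \<and> s (c' - int k)} = {k\<in>{..<m}. R (c + int k)}"
    unfolding R_def by auto
  then have "card {k\<in>{..<m}. s (c + int k) \<and> s (c' - int k)} = card {y\<in>{0..<int m}. R y}"
    using shift_count[of m R c, OF m R] by simp
  also have "\<dots> \<le> M" using cM[of "c + c'"] unfolding R_def by simp
  finally show ?thesis .
qed


lemma floor_shift1: "h > 0 \<Longrightarrow> \<lfloor>(y + real k * h)/h\<rfloor> = \<lfloor>y/h\<rfloor> + int k" for h y :: real
proof -
  assume h: "h > 0"
  have "(y + real k * h)/h = y/h + of_int (int k)" using h by (simp add: field_simps)
  then show ?thesis by simp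
qed

lemma floor_shift2: "h > 0 \<Longrightarrow> \<lfloor>(t - y - real k * h)/h\<rfloor> = \<lfloor>(t - y)/h\<rfloor> - int k" for h y :: real
proof -
  assume h: "h > 0"
  have "(t - y - real k * h)/h = (t - y)/h - of_int (int k)" using h by (simp add: field_simps)
  then show ?thesis using floor_diff_of_int[of "(t - y)/h" "int k"] by simp
qed

lemma floor_sets1: "{x::real. Q \<lfloor>x / h\<rfloor>} \<in> sets lebesgue"
proof -
  have "{x::real. Q \<lfloor>x / h\<rfloor>} \<in> sets borel" by measurable
  then show ?thesis by (metis sets_completionI_sets sets_lborel)
qed

lemma floor_sets2: "{x::real. Q \<lfloor>x / h\<rfloor> \<lfloor>(t - x) / h\<rfloor>} \<in> sets lebesgue"
proof -
  have "{x::real. Q \<lfloor>x / h\<rfloor> \<lfloor>(t - x) / h\<rfloor>} \<in> sets borel" by measurable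
  then show ?thesis by (metis sets_completionI_sets sets_lborel)
qed

lemma int_ind: "X \<in> lmeasurable \<Longrightarrow> integrable lebesgue (\<lambda>x. indicator X x :: real)"
  using lmeasurable_iff_integrable[of X] by simp

lemma shift_cmp:
  assumes X: "X \<in> lmeasurable" and Y: "Y \<in> sets lebesgue" and Y': "Y' \<in> sets lebesgue"
    and img: "(+) (a::real) ` Y = Y'"
  shows "measure lebesgue (X \<inter> Y) \<le> measure lebesgue (X \<inter> Y') + measure lebesgue (((+) a ` X) - X)"
proof -
  have aX: "(+) a ` X \<in> lmeasurable" by (rule transl_lmeas[OF X])
  have XY: "X \<inter> Y' \<in> lmeasurable" by (rule fmeasurableI2[OF X]) (use X Y' in auto)
  have aXX: "(+) a ` X - X \<in> lmeasurable" by (rule fmeasurableI2[OF aX]) (use X aX in auto)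
  have "measure lebesgue (X \<inter> Y) = measure lebesgue ((+) a ` (X \<inter> Y))" by (simp add: transl_measure)
  also have "(+) a ` (X \<inter> Y) = ((+) a ` X) \<inter> Y'" using img by (auto simp: image_Int)
  also have "measure lebesgue (((+) a ` X) \<inter> Y') \<le> measure lebesgue ((X \<inter> Y') \<union> (((+) a ` X) - X))"
  proof (rule measure_mono_fmeasurable)
    show "(+) a ` X \<inter> Y' \<subseteq> X \<inter> Y' \<union> ((+) a ` X - X)" by auto
    show "(+) a ` X \<inter> Y' \<in> sets lebesgue" using aX Y' by auto
    have "X \<inter> Y' \<in> lmeasurable" by (rule fmeasurableI2[OF X]) (use X Y' in auto)
    moreover have "(+) a ` X - X \<in> lmeasurable" by (rule fmeasurableI2[OF aX]) (use X aX in auto)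
    ultimately show "X \<inter> Y' \<union> ((+) a ` X - X) \<in> lmeasurable" by (rule fmeasurable.Un)
  qed
  also have "\<dots> \<le> measure lebesgue (X \<inter> Y') + measure lebesgue (((+) a ` X) - X)"
    by (rule msub[OF XY aXX])
  finally show ?thesis .
qed

lemma AL:
  assumes A: "A \<subseteq> {0..<1::real}" "A \<in> sets lebesgue" and p: "pat m s K M" and eta: "\<eta> > 0"
  shows "\<exists>B. B \<subseteq> A \<and> B \<in> sets lebesgue \<and>
     \<bar>measure lebesgue B - (real K / real m) * measure lebesgue A\<bar> \<le> \<eta> \<and>
     (\<forall>t. measure lebesgue (B \<inter> {x. t - x \<in> B}) \<le> (real M / real m) * measure lebesgue (A \<inter> {x. t - x \<in> A}) + \<eta>)"
proof -
  have m: "m > 0" using p unfolding pat_def by auto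
  have Am: "A \<in> lmeasurable" using sub01_lmeas A by blast
  have "bounded {0..1::real}" by (rule compact_imp_bounded) simp
  then have Ab: "bounded A" by (rule bounded_subset) (use A(1) in auto)
  obtain d where d: "d > 0" "\<And>s::real. \<bar>s\<bar> < d \<Longrightarrow> measure lebesgue (((+) s ` A) - A) < \<eta>/2"
    using trans_cont[OF Am Ab, of "\<eta>/2"] eta by auto
  define h where "h = d / (real m + 1)"
  have h: "h > 0" unfolding h_def using d by simp
  have kh: "\<bar>real k * h\<bar> < d" if "k < m" for k
  proof -
    have "real k * h \<le> real m * h" using that h by (intro mult_right_mono) auto
    also have "\<dots> < d" unfolding h_def using d by (simp add: field_simps)
    finally show ?thesis using h by simp
  qed
  define \<phi> where "\<phi> a = measure lebesgue (((+) a ` A) - A)" for a :: real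
  have phi: "\<phi> (real k * h) < \<eta>/2" "\<phi> (- (real k * h)) < \<eta>/2" if "k < m" for k
    unfolding \<phi>_def using d(2)[of "real k * h"] d(2)[of "- (real k * h)"] kh[OF that] by auto
  define P where "P k = {x::real. s (\<lfloor>x/h\<rfloor> + int k)}" for k :: nat
  have Ps: "P k \<in> sets lebesgue" for k unfolding P_def by (rule floor_sets1)
  have APm: "A \<inter> P k \<in> lmeasurable" for k by (rule fmeasurableI2[OF Am]) (use Am Ps in auto)
  define B where "B = A \<inter> P 0"
  have imgP1: "(+) (- (real k * h)) ` P 0 = P k" for k
    unfolding transl_eq P_def using floor_shift1[OF h] by auto
  have imgP2: "(+) (real k * h) ` P k = P 0" for k
  proof -
    have "\<lfloor>(y - real k * h)/h\<rfloor> + int k = \<lfloor>y/h\<rfloor>" for y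
      using floor_shift1[OF h, of "y - real k * h" k] by simp
    then show ?thesis unfolding transl_eq P_def by auto
  qed
  have PA1: "measure lebesgue (A \<inter> P 0) \<le> measure lebesgue (A \<inter> P k) + \<eta>/2" if "k < m" for k
    using shift_cmp[OF Am Ps Ps imgP1[of k]] phi(2)[OF that] unfolding \<phi>_def by linarith
  have PA2: "measure lebesgue (A \<inter> P k) \<le> measure lebesgue (A \<inter> P 0) + \<eta>/2" if "k < m" for k
    using shift_cmp[OF Am Ps Ps imgP2[of k]] phi(1)[OF that] unfolding \<phi>_def by linarith
  have sumP: "(\<Sum>k<m. measure lebesgue (A \<inter> P k)) = real K * measure lebesgue A"
  proof -
    have pw: "(\<Sum>k<m. indicator (A \<inter> P k) x) = real K * indicator A x" for x :: real
    proof (cases "x \<in> A")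
      case True
      have "(\<Sum>k<m. indicator (A \<inter> P k) x) = (\<Sum>k<m. if s (\<lfloor>x/h\<rfloor> + int k) then 1 else (0::real))"
        using True unfolding P_def by (intro sum.cong) (auto simp: indicator_def)
      also have "\<dots> = real (card {k\<in>{..<m}. s (\<lfloor>x/h\<rfloor> + int k)})"
        by (simp add: sum.If_cases Int_def)
      also have "\<dots> = real K" using pat_count1[OF p] by simp
      finally show ?thesis using True by simp
    next
      case False
      then show ?thesis by simp
    qed
    have "(\<Sum>k<m. measure lebesgue (A \<inter> P k)) = (\<Sum>k<m. integral\<^sup>L lebesgue (indicator (A \<inter> P k)))"
      by simp
    also have "\<dots> = integral\<^sup>L lebesgue (\<lambda>x. \<Sum>k<m. indicator (A \<inter> P k) x)"
      by (subst Bochner_Integration.integral_sum) (use APm int_ind in auto)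
    also have "\<dots> = integral\<^sup>L lebesgue (\<lambda>x. real K * indicator A x)"
      using pw by simp
    also have "\<dots> = real K * measure lebesgue A" by simp
    finally show ?thesis .
  qed
  have mB: "\<bar>measure lebesgue B - (real K / real m) * measure lebesgue A\<bar> \<le> \<eta>"
  proof -
    have "real m * measure lebesgue B = (\<Sum>k<m. measure lebesgue (A \<inter> P 0))" by (simp add: B_def)
    also have "\<dots> \<le> (\<Sum>k<m. measure lebesgue (A \<inter> P k) + \<eta>/2)" by (rule sum_mono) (use PA1 in auto)
    also have "\<dots> = real K * measure lebesgue A + real m * (\<eta>/2)" by (simp add: sum.distrib sumP)
    finally have up: "real m * measure lebesgue B \<le> real K * measure lebesgue A + real m * (\<eta>/2)" .
    have "real K * measure lebesgue A - real m * (\<eta>/2) = (\<Sum>k<m. measure lebesgue (A \<inter> P k) - \<eta>/2)"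
      by (simp add: sum_subtractf sumP)
    also have "\<dots> \<le> (\<Sum>k<m. measure lebesgue (A \<inter> P 0))" by (rule sum_mono) (use PA2 in force)
    also have "\<dots> = real m * measure lebesgue B" by (simp add: B_def)
    finally have lo: "real K * measure lebesgue A - real m * (\<eta>/2) \<le> real m * measure lebesgue B" .
    have "real m > 0" using m by simp
    then have "\<bar>real m * measure lebesgue B - real K * measure lebesgue A\<bar> \<le> real m * (\<eta>/2)"
      using up lo by linarith
    moreover have "real m * measure lebesgue B - real K * measure lebesgue A =
        real m * (measure lebesgue B - (real K / real m) * measure lebesgue A)"
      using \<open>real m > 0\<close> by (simp add: field_simps)
    ultimately have "real m * \<bar>measure lebesgue B - (real K / real m) * measure lebesgue A\<bar> \<le> real m * (\<eta>/2)"
      by (simp add: abs_mult)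
    then have "\<bar>measure lebesgue B - (real K / real m) * measure lebesgue A\<bar> \<le> \<eta>/2"
      using \<open>real m > 0\<close> by simp
    moreover have "\<eta>/2 \<le> \<eta>" using eta by simp
    ultimately show ?thesis by (rule order_trans)
  qed
  have corr: "measure lebesgue (B \<inter> {x. t - x \<in> B}) \<le> (real M / real m) * measure lebesgue (A \<inter> {x. t - x \<in> A}) + \<eta>" for t
  proof -
    define E where "E = A \<inter> {x. t - x \<in> A}"
    have Em: "E \<in> lmeasurable" unfolding E_def by (rule sub01_lmeas) (use A refl_sets[OF A(2)] in auto)
    define Q where "Q k = {x::real. s (\<lfloor>x/h\<rfloor> + int k) \<and> s (\<lfloor>(t - x)/h\<rfloor> - int k)}" for k :: nat
    have Qs: "Q k \<in> sets lebesgue" for k unfolding Q_def by (rule floor_sets2)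
    have EQm: "E \<inter> Q k \<in> lmeasurable" for k by (rule fmeasurableI2[OF Em]) (use Em Qs in auto)
    have BE: "B \<inter> {x. t - x \<in> B} = E \<inter> Q 0" unfolding B_def E_def P_def Q_def by auto
    have imgQ: "(+) (- (real k * h)) ` Q 0 = Q k" for k
    proof -
      have "\<lfloor>(t - (y + real k * h))/h\<rfloor> = \<lfloor>(t - y)/h\<rfloor> - int k" for y
        using floor_shift2[OF h, of t y k] by (simp add: algebra_simps)
      then show ?thesis unfolding transl_eq Q_def using floor_shift1[OF h] by auto
    qed
    have Ediff: "measure lebesgue (((+) (- (real k * h)) ` E) - E) < \<eta>" if "k < m" for k
    proof -
      define a where "a = real k * h"
      have sub: "((+) (- a) ` E) - E \<subseteq> (((+) (- a) ` A) - A) \<union> {x. t - x \<in> ((+) a ` A) - A}"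
        unfolding E_def transl_eq by (auto simp: diff_diff_eq)
      have S1: "((+) (- a) ` A) - A \<in> sets lebesgue" using transl_sets[OF A(2), of "-a"] A(2) by (rule sets.Diff)
      have S2: "((+) a ` A) - A \<in> sets lebesgue" using transl_sets[OF A(2), of "a"] A(2) by (rule sets.Diff)
      have L1: "((+) (- a) ` A) - A \<in> lmeasurable"
        by (rule fmeasurableI2[OF transl_lmeas[OF Am, of "-a"] _ S1]) auto
      have L2: "((+) a ` A) - A \<in> lmeasurable"
        by (rule fmeasurableI2[OF transl_lmeas[OF Am, of "a"] _ S2]) auto
      have L3: "{x. t - x \<in> ((+) a ` A) - A} \<in> lmeasurable" by (rule refl_lmeas[OF L2])
      have L4: "((+) (- a) ` E) - E \<in> sets lebesgue"
        using transl_sets[OF fmeasurableD[OF Em], of "-a"] fmeasurableD[OF Em] by (rule sets.Diff)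
      have "measure lebesgue (((+) (- a) ` E) - E) \<le> measure lebesgue ((((+) (- a) ` A) - A) \<union> {x. t - x \<in> ((+) a ` A) - A})"
        by (rule measure_mono_fmeasurable[OF sub L4]) (use L1 L3 in auto)
      also have "\<dots> \<le> measure lebesgue (((+) (- a) ` A) - A) + measure lebesgue {x. t - x \<in> ((+) a ` A) - A}"
        by (rule msub[OF L1 L3])
      also have "\<dots> = \<phi> (- a) + \<phi> a" unfolding \<phi>_def using refl_measure[of t "((+) a ` A) - A"] by simp
      also have "\<dots> < \<eta>" using phi[OF that] unfolding a_def by linarith
      finally show ?thesis unfolding a_def .
    qed
    have QE: "measure lebesgue (E \<inter> Q 0) \<le> measure lebesgue (E \<inter> Q k) + \<eta>" if "k < m" for k
      using shift_cmp[OF Em Qs Qs imgQ[of k]] Ediff[OF that] by linarith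
    have sumQ: "(\<Sum>k<m. measure lebesgue (E \<inter> Q k)) \<le> real M * measure lebesgue E"
    proof -
      have pw: "(\<Sum>k<m. indicator (E \<inter> Q k) x) \<le> real M * indicator E x" for x :: real
      proof (cases "x \<in> E")
        case True
        have "(\<Sum>k<m. indicator (E \<inter> Q k) x) =
            (\<Sum>k<m. if s (\<lfloor>x/h\<rfloor> + int k) \<and> s (\<lfloor>(t - x)/h\<rfloor> - int k) then 1 else (0::real))"
          using True unfolding Q_def by (intro sum.cong) (auto simp: indicator_def)
        also have "\<dots> = real (card {k\<in>{..<m}. s (\<lfloor>x/h\<rfloor> + int k) \<and> s (\<lfloor>(t - x)/h\<rfloor> - int k)})"
          by (simp add: sum.If_cases Int_def)
        also have "\<dots> \<le> real M" using pat_count2[OF p] by simp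
        finally show ?thesis using True by simp
      next
        case False
        then show ?thesis by simp
      qed
      have "(\<Sum>k<m. measure lebesgue (E \<inter> Q k)) = (\<Sum>k<m. integral\<^sup>L lebesgue (indicator (E \<inter> Q k)))"
        by simp
      also have "\<dots> = integral\<^sup>L lebesgue (\<lambda>x. \<Sum>k<m. indicator (E \<inter> Q k) x)"
        by (subst Bochner_Integration.integral_sum) (use EQm int_ind in auto)
      also have "\<dots> \<le> integral\<^sup>L lebesgue (\<lambda>x. real M * indicator E x)"
      proof (rule integral_mono)
        show "integrable lebesgue (\<lambda>x. \<Sum>k<m. indicator (E \<inter> Q k) x :: real)"
          by (rule Bochner_Integration.integrable_sum) (use EQm int_ind in auto)
        show "integrable lebesgue (\<lambda>x. real M * indicator E x :: real)"
          by (rule integrable_mult_right) (use Em int_ind in auto)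
      qed (use pw in auto)
      also have "\<dots> = real M * measure lebesgue E" by simp
      finally show ?thesis .
    qed
    have "real m * measure lebesgue (E \<inter> Q 0) = (\<Sum>k<m. measure lebesgue (E \<inter> Q 0))" by simp
    also have "\<dots> \<le> (\<Sum>k<m. measure lebesgue (E \<inter> Q k) + \<eta>)" by (rule sum_mono) (use QE in auto)
    also have "\<dots> \<le> real M * measure lebesgue E + real m * \<eta>" using sumQ by (simp add: sum.distrib)
    finally have "real m * measure lebesgue (E \<inter> Q 0) \<le> real M * measure lebesgue E + real m * \<eta>" .
    moreover have "real m > 0" using m by simp
    ultimately have "measure lebesgue (E \<inter> Q 0) \<le> (real M * measure lebesgue E + real m * \<eta>) / real m"
      by (simp add: field_simps)
    also have "\<dots> = (real M / real m) * measure lebesgue E + \<eta>"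
      using \<open>real m > 0\<close> by (simp add: field_simps)
    finally show ?thesis using BE unfolding E_def by simp
  qed
  have "B \<subseteq> A" "B \<in> sets lebesgue" unfolding B_def using A(2) Ps by auto
  then show ?thesis using mB corr by blast
qed


lemma pat_K_le: "pat m s K M \<Longrightarrow> K \<le> m"
proof -
  assume p: "pat m s K M"
  have "card {x\<in>{0..<int m}. s x} \<le> card {0..<int m}" by (rule card_mono) auto
  then show ?thesis using p unfolding pat_def by simp
qed

lemma refl_count:
  assumes m: "m > 0" and per: "\<And>x. s (x mod int m) = s x"
  shows "card {x\<in>{0..<int m}. s (j - x)} = card {x\<in>{0..<int m}. s x}"
proof -
  have "{x\<in>{0..<int m}. s (j - x)} = (\<lambda>y. j - y) ` {y\<in>{j - int m + 1..<j - int m + 1 + int m}. s y}"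
  proof (intro equalityI subsetI)
    fix x assume "x \<in> {x\<in>{0..<int m}. s (j - x)}"
    then show "x \<in> (\<lambda>y. j - y) ` {y\<in>{j - int m + 1..<j - int m + 1 + int m}. s y}"
      by (intro image_eqI[of _ _ "j - x"]) auto
  qed auto
  moreover have "inj_on (\<lambda>y. j - y) {y\<in>{j - int m + 1..<j - int m + 1 + int m}. s y}"
    by (auto intro: inj_onI)
  ultimately have "card {x\<in>{0..<int m}. s (j - x)} = card {y\<in>{j - int m + 1..<j - int m + 1 + int m}. s y}"
    by (simp add: card_image)
  also have "\<dots> = card {x\<in>{0..<int m}. s x}" by (rule window[of m s "j - int m + 1", OF m per])
  finally show ?thesis .
qed

lemma pat_compl:
  assumes p: "pat m s K M"
  shows "pat m (\<lambda>x. \<not> s x) (m - K) (m + M - 2 * K)"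
proof -
  have m: "m > 0" and per: "\<And>x. s (x mod int m) = s x" and cK: "card {x\<in>{0..<int m}. s x} = K"
    and cM: "\<And>j. card {x\<in>{0..<int m}. s x \<and> s (j - x)} \<le> M"
    using p unfolding pat_def by auto
  have c1: "card {x\<in>{0..<int m}. \<not> s x} = m - K"
  proof -
    have "{x\<in>{0..<int m}. \<not> s x} = {0..<int m} - {x\<in>{0..<int m}. s x}" by auto
    moreover have "card ({0..<int m} - {x\<in>{0..<int m}. s x}) = card {0..<int m} - card {x\<in>{0..<int m}. s x}"
      by (rule card_Diff_subset) (rule finite_subset[of _ "{0..<int m}"], auto)
    ultimately have "card {x\<in>{0..<int m}. \<not> s x} = card {0..<int m} - card {x\<in>{0..<int m}. s x}"
      by simp
    then show ?thesis using cK by simp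
  qed
  have c2: "card {x\<in>{0..<int m}. \<not> s x \<and> \<not> s (j - x)} \<le> m + M - 2 * K" for j
  proof -
    let ?X = "{x\<in>{0..<int m}. s x}" and ?Y = "{x\<in>{0..<int m}. s (j - x)}"
    have cY: "card ?Y = K" using refl_count[of m s j, OF m per] cK by simp
    have fin: "finite ?X" "finite ?Y" by (rule finite_subset[of _ "{0..<int m}"], auto)+
    have "card (?X \<union> ?Y) + card (?X \<inter> ?Y) = card ?X + card ?Y" by (rule card_Un_Int[OF fin, symmetric])
    moreover have "?X \<inter> ?Y = {x\<in>{0..<int m}. s x \<and> s (j - x)}" by auto
    ultimately have u: "card (?X \<union> ?Y) + card {x\<in>{0..<int m}. s x \<and> s (j - x)} = 2 * K"
      using cK cY by simp
    have "{x\<in>{0..<int m}. \<not> s x \<and> \<not> s (j - x)} = {0..<int m} - (?X \<union> ?Y)" by auto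
    moreover have "card ({0..<int m} - (?X \<union> ?Y)) = card {0..<int m} - card (?X \<union> ?Y)"
      by (rule card_Diff_subset) (rule finite_subset[of _ "{0..<int m}"], auto)
    ultimately have "card {x\<in>{0..<int m}. \<not> s x \<and> \<not> s (j - x)} = card {0..<int m} - card (?X \<union> ?Y)"
      by simp
    moreover have "card (?X \<union> ?Y) \<le> m"
    proof -
      have "card (?X \<union> ?Y) \<le> card {0..<int m}" by (rule card_mono) auto
      then show ?thesis by simp
    qed
    ultimately show ?thesis using u cM[of j] by simp
  qed
  have per': "(\<not> s (x mod int m)) = (\<not> s x)" for x using per by simp
  show ?thesis unfolding pat_def using m per' c1 c2 by blast
qed

lemma mod_mult2': "(x::int) mod (int m1 * int m2) div int m2 = x div int m2 mod int m1"
  and mod_mult2'': "(x::int) mod (int m1 * int m2) mod int m2 = x mod int m2"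
proof -
  have e: "x mod (int m2 * int m1) = int m2 * (x div int m2 mod int m1) + x mod int m2"
    by (rule mod_mult2_eq')
  show "(x::int) mod (int m1 * int m2) div int m2 = x div int m2 mod int m1"
  proof (cases "m2 = 0")
    case True then show ?thesis by simp
  next
    case False
    then show ?thesis using e by (simp add: mult.commute)
  qed
  show "(x::int) mod (int m1 * int m2) mod int m2 = x mod int m2"
    using e by (simp add: mult.commute)
qed

lemma div_lt:
  assumes "0 \<le> x" "x < int m1 * int m2" "m2 > 0"
  shows "x div int m2 < int m1"
proof (rule ccontr)
  assume "\<not> x div int m2 < int m1"
  then have "int m1 \<le> x div int m2" by simp
  then have "int m1 * int m2 \<le> (x div int m2) * int m2" by (rule mult_right_mono) auto
  also have "\<dots> \<le> x"
  proof -
    have "x = x div int m2 * int m2 + x mod int m2" by simp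
    moreover have "0 \<le> x mod int m2" using assms(3) by simp
    ultimately show ?thesis by linarith
  qed
  finally show False using assms(2) by simp
qed

lemma pat_prod:
  assumes p1: "pat m1 s1 K1 M1" and p2: "pat m2 s2 K2 M2"
  shows "pat (m1 * m2) (\<lambda>x. s1 (x div int m2) \<and> s2 (x mod int m2)) (K1 * K2) (M1 * M2)"
proof -
  have m1: "m1 > 0" and per1: "\<And>x. s1 (x mod int m1) = s1 x" and cK1: "card {x\<in>{0..<int m1}. s1 x} = K1"
    and cM1: "\<And>j. card {x\<in>{0..<int m1}. s1 x \<and> s1 (j - x)} \<le> M1"
    using p1 unfolding pat_def by auto
  have m2: "m2 > 0" and per2: "\<And>x. s2 (x mod int m2) = s2 x" and cK2: "card {x\<in>{0..<int m2}. s2 x} = K2"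
    and cM2: "\<And>j. card {x\<in>{0..<int m2}. s2 x \<and> s2 (j - x)} \<le> M2"
    using p2 unfolding pat_def by auto
  define s where "s x = (s1 (x div int m2) \<and> s2 (x mod int m2))" for x
  have per: "s (x mod int (m1 * m2)) = s x" for x
    unfolding s_def using per1[of "x div int m2"] by (simp add: mod_mult2' mod_mult2'')
  define f where "f x = (x mod int m2, x div int m2)" for x :: int
  have finj: "inj_on f {0..<int (m1 * m2)}"
  proof (rule inj_onI)
    fix x y assume "f x = f y"
    then have "x mod int m2 = y mod int m2" "x div int m2 = y div int m2" unfolding f_def by auto
    then show "x = y" by (metis div_mult_mod_eq)
  qed
  have cK: "card {x\<in>{0..<int (m1 * m2)}. s x} = K1 * K2"
  proof -
    have img: "f ` {x\<in>{0..<int (m1 * m2)}. s x} = {b\<in>{0..<int m2}. s2 b} \<times> {a\<in>{0..<int m1}. s1 a}"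
    proof (intro equalityI subsetI)
      fix z assume "z \<in> f ` {x\<in>{0..<int (m1 * m2)}. s x}"
      then obtain x where x: "x \<in> {0..<int (m1 * m2)}" "s x" "z = f x" by auto
      have "x div int m2 < int m1"
        using x(1) m2 by (intro div_lt) auto
      moreover have "0 \<le> x div int m2" using x(1) m2 pos_imp_zdiv_nonneg_iff[of "int m2" x] by auto
      ultimately show "z \<in> {b\<in>{0..<int m2}. s2 b} \<times> {a\<in>{0..<int m1}. s1 a}"
        using x m2 unfolding f_def s_def by auto
    next
      fix z assume z: "z \<in> {b\<in>{0..<int m2}. s2 b} \<times> {a\<in>{0..<int m1}. s1 a}"
      then obtain b a where ba: "z = (b, a)" "0 \<le> b" "b < int m2" "s2 b" "0 \<le> a" "a < int m1" "s1 a" by auto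
      define x where "x = a * int m2 + b"
      have xd: "x div int m2 = a" "x mod int m2 = b" unfolding x_def using ba by auto
      have "x < int (m1 * m2)"
      proof -
        have "a * int m2 + b < (a + 1) * int m2" using ba by (simp add: algebra_simps)
        also have "\<dots> \<le> int m1 * int m2" using ba by (intro mult_right_mono) auto
        finally show ?thesis unfolding x_def by simp
      qed
      moreover have "0 \<le> x" unfolding x_def using ba by simp
      ultimately have "x \<in> {x\<in>{0..<int (m1 * m2)}. s x}" unfolding s_def using xd ba by auto
      then show "z \<in> f ` {x\<in>{0..<int (m1 * m2)}. s x}" using xd ba unfolding f_def by force
    qed
    have "card {x\<in>{0..<int (m1 * m2)}. s x} = card (f ` {x\<in>{0..<int (m1 * m2)}. s x})"
      by (rule card_image[symmetric]) (rule inj_on_subset[OF finj], auto)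
    also have "\<dots> = K2 * K1" unfolding img using cK1 cK2 by (simp add: card_cartesian_product)
    finally show ?thesis by simp
  qed
  have cM: "card {x\<in>{0..<int (m1 * m2)}. s x \<and> s (j - x)} \<le> M1 * M2" for j
  proof -
    define Bs where "Bs = {b\<in>{0..<int m2}. s2 b \<and> s2 (j - b)}"
    define As where "As b = {a\<in>{0..<int m1}. s1 a \<and> s1 ((j - b) div int m2 - a)}" for b
    have fB: "finite Bs" unfolding Bs_def by (rule finite_subset[of _ "{0..<int m2}"]) auto
    have fA: "finite (As b)" for b unfolding As_def by (rule finite_subset[of _ "{0..<int m1}"]) auto
    have sub: "f ` {x\<in>{0..<int (m1 * m2)}. s x \<and> s (j - x)} \<subseteq> Sigma Bs As"
    proof
      fix z assume "z \<in> f ` {x\<in>{0..<int (m1 * m2)}. s x \<and> s (j - x)}"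
      then obtain x where x: "x \<in> {0..<int (m1 * m2)}" "s x" "s (j - x)" "z = f x" by auto
      define a where "a = x div int m2"
      define b where "b = x mod int m2"
      have xab: "x = a * int m2 + b" unfolding a_def b_def by simp
      have J: "j - x = (j - b) + (- a) * int m2" using xab by (simp add: algebra_simps)
      have jd: "(j - x) div int m2 = (j - b) div int m2 - a"
        unfolding J using m2 div_mult_self1[of "int m2" "j - b" "- a"] by simp
      have jm: "(j - x) mod int m2 = (j - b) mod int m2"
        unfolding J using mod_mult_self1[of "j - b" "- a" "int m2"] by simp
      have "a < int m1"
        using x(1) m2 unfolding a_def by (intro div_lt) auto
      moreover have "0 \<le> a" using x(1) m2 pos_imp_zdiv_nonneg_iff[of "int m2" x] unfolding a_def by auto
      moreover have "0 \<le> b" "b < int m2" unfolding b_def using m2 by auto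
      moreover have "s2 (j - b)" using x(3) jm per2[of "j - b"] unfolding s_def by simp
      ultimately show "z \<in> Sigma Bs As"
        using x jd unfolding Bs_def As_def s_def f_def a_def[symmetric] b_def[symmetric] by auto
    qed
    have "card {x\<in>{0..<int (m1 * m2)}. s x \<and> s (j - x)} = card (f ` {x\<in>{0..<int (m1 * m2)}. s x \<and> s (j - x)})"
      by (rule card_image[symmetric]) (rule inj_on_subset[OF finj], auto)
    also have "\<dots> \<le> card (Sigma Bs As)"
    proof (rule card_mono[OF _ sub])
      show "finite (Sigma Bs As)"
        by (rule finite_subset[of _ "{0..<int m2} \<times> {0..<int m1}"]) (auto simp: Bs_def As_def)
    qed
    also have "\<dots> = (\<Sum>b\<in>Bs. card (As b))" by (rule card_SigmaI) (use fB fA in auto)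
    also have "\<dots> \<le> (\<Sum>b\<in>Bs. M1)" by (rule sum_mono) (use cM1 in \<open>simp add: As_def\<close>)
    also have "\<dots> = card Bs * M1" by simp
    also have "\<dots> \<le> M2 * M1" using cM2[of j] unfolding Bs_def by (intro mult_right_mono) auto
    finally show ?thesis by (simp add: mult.commute)
  qed
  show ?thesis unfolding pat_def using m1 m2 per cK cM unfolding s_def by auto
qed


lemma small_cong:
  fixes u v P :: int
  assumes "[u = v] (mod P)" "\<bar>u - v\<bar> < P"
  shows "u = v"
proof -
  have "P dvd (u - v)" using assms(1) by (simp add: cong_iff_dvd_diff)
  then obtain q where q: "u - v = P * q" by blast
  have "P > 0" using assms(2) by simp
  have "\<bar>P * q\<bar> < P" using assms(2) q by simp
  then have "\<bar>q\<bar> < 1" using \<open>P > 0\<close> by (simp add: abs_mult)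
  then show ?thesis using q by simp
qed

locale qrp =
  fixes p :: nat
  assumes p_prime: "prime p" and p_mod: "p mod 4 = 3"
begin

abbreviation "P \<equiv> int p"

definition L :: "int \<Rightarrow> int" where "L a = Legendre a P"

lemma p_gt2: "p > 2"
proof -
  have "p \<ge> 2" using p_prime prime_ge_2_nat by blast
  moreover have "p \<noteq> 2" using p_mod by auto
  ultimately show ?thesis by simp
qed

lemma P_prime: "prime P" using p_prime by simp

lemma L_vals: "L a = 0 \<or> L a = 1 \<or> L a = -1"
  unfolding L_def Legendre_def by auto

lemma L_zero: "L a = 0 \<longleftrightarrow> P dvd a"
  unfolding L_def Legendre_def by (auto simp: cong_0_iff)

lemma L_mod: "L (a mod P) = L a"
proof -
  have c1: "[a mod P = 0] (mod P) \<longleftrightarrow> [a = 0] (mod P)" by (simp add: cong_def)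
  have c2: "[y^2 = a mod P] (mod P) \<longleftrightarrow> [y^2 = a] (mod P)" for y by (simp add: cong_def)
  show ?thesis unfolding L_def Legendre_def QuadRes_def using c1 c2 by simp
qed

lemma L_cong: "[a = b] (mod P) \<Longrightarrow> L a = L b"
  using L_mod[of a] L_mod[of b] by (simp add: cong_def)

lemma L_euler: "[L a = a ^ ((p - 1) div 2)] (mod P)"
  unfolding L_def using euler_criterion[OF p_prime p_gt2] by simp

lemma L_mult: "L (a * b) = L a * L b"
proof -
  have "[L (a * b) = (a * b) ^ ((p - 1) div 2)] (mod P)" by (rule L_euler)
  also have "(a * b) ^ ((p - 1) div 2) = a ^ ((p - 1) div 2) * b ^ ((p - 1) div 2)" by (simp add: power_mult_distrib)
  also have "[\<dots> = L a * L b] (mod P)" using L_euler[of a] L_euler[of b] by (intro cong_mult) (auto simp: cong_sym)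
  finally have c: "[L (a * b) = L a * L b] (mod P)" .
  have "\<bar>L (a * b) - L a * L b\<bar> < P"
    using L_vals[of "a*b"] L_vals[of a] L_vals[of b] p_gt2 by auto
  then show ?thesis using small_cong[OF c] by simp
qed

lemma L_neg1: "L (-1) = -1"
proof -
  define q where "q = p div 4"
  have q: "p = 4 * q + 3" unfolding q_def using p_mod div_mult_mod_eq[of p 4] by linarith
  have k: "(p - 1) div 2 = 2 * q + 1" using q by simp
  have "[L (-1) = (-1) ^ ((p - 1) div 2)] (mod P)" by (rule L_euler)
  then have c: "[L (-1) = -1] (mod P)" unfolding k by simp
  have "\<bar>L (-1) - (-1)\<bar> < P" using L_vals[of "-1"] p_gt2 by auto
  then show ?thesis using small_cong[OF c] by simp
qed

lemma L_neg: "L (- a) = - L a"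
  using L_mult[of "-1" a] L_neg1 by simp

lemma L_sq: "\<not> P dvd x \<Longrightarrow> L (x * x * w) = L w"
proof -
  assume "\<not> P dvd x"
  then have "L x \<noteq> 0" using L_zero by simp
  then have "L x * L x = 1" using L_vals[of x] by auto
  then show ?thesis using L_mult[of "x * x" w] L_mult[of x x] by simp
qed

lemma cong_range: "x \<in> {0..<P} \<Longrightarrow> y \<in> {0..<P} \<Longrightarrow> [x = y] (mod P) \<Longrightarrow> x = y"
  by (simp add: cong_def)

lemma perm_mod:
  assumes inj: "\<And>x y. x \<in> {0..<P} \<Longrightarrow> y \<in> {0..<P} \<Longrightarrow> [f x = f y] (mod P) \<Longrightarrow> x = y"
  shows "bij_betw (\<lambda>x. f x mod P) {0..<P} {0..<P}"
proof -
  have i: "inj_on (\<lambda>x. f x mod P) {0..<P}"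
    by (rule inj_onI, rule inj; simp add: cong_def)
  have s: "(\<lambda>x. f x mod P) ` {0..<P} \<subseteq> {0..<P}" using p_gt2 by auto
  have "(\<lambda>x. f x mod P) ` {0..<P} = {0..<P}" by (rule endo_inj_surj[OF _ s i]) simp
  then show ?thesis using i unfolding bij_betw_def by simp
qed

lemma sum_perm:
  fixes g :: "int \<Rightarrow> 'a::comm_monoid_add"
  assumes inj: "\<And>x y. x \<in> {0..<P} \<Longrightarrow> y \<in> {0..<P} \<Longrightarrow> [f x = f y] (mod P) \<Longrightarrow> x = y"
  shows "(\<Sum>x\<in>{0..<P}. g (f x mod P)) = (\<Sum>x\<in>{0..<P}. g x)"
  by (rule sum.reindex_bij_betw[OF perm_mod[OF inj]])

lemma sum_L: "(\<Sum>x\<in>{0..<P}. L x) = 0"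
proof -
  have "(\<Sum>x\<in>{0..<P}. L ((- x) mod P)) = (\<Sum>x\<in>{0..<P}. L x)"
  proof (rule sum_perm)
    fix x y assume "x \<in> {0..<P}" "y \<in> {0..<P}" "[- x = - y] (mod P)"
    then show "x = y" using cong_range cong_minus_minus_iff by blast
  qed
  moreover have "(\<Sum>x\<in>{0..<P}. L ((- x) mod P)) = - (\<Sum>x\<in>{0..<P}. L x)"
    by (simp add: L_mod L_neg sum_negf)
  ultimately show ?thesis by simp
qed

lemma dvd_range: "x \<in> {0..<P} \<Longrightarrow> y \<in> {0..<P} \<Longrightarrow> P dvd (x - y) \<Longrightarrow> x = y"
  using cong_range[of x y] by (simp add: cong_iff_dvd_diff)

lemma card_int_sum: "finite A \<Longrightarrow> int (card {x\<in>A. Q x}) = (\<Sum>x\<in>A. if Q x then 1 else 0)"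
  by (simp add: sum.If_cases Int_def)

lemma L_range_zero: "x \<in> {0..<P} \<Longrightarrow> L x = 0 \<longleftrightarrow> x = 0"
  using L_zero[of x] dvd_range[of x 0] p_gt2 by auto

lemma card_QR: "card {x\<in>{0..<P}. L x = 1} = (p - 1) div 2"
proof -
  have pw: "2 * (if L x = 1 then 1 else 0) = L x + (if x = 0 then 0 else 1)" if "x \<in> {0..<P}" for x
    using L_vals[of x] L_range_zero[OF that] by auto
  have c: "int (card {x\<in>{0..<P}. L x = 1}) = (\<Sum>x\<in>{0..<P}. if L x = 1 then 1 else 0)"
    by (rule card_int_sum) simp
  have "2 * int (card {x\<in>{0..<P}. L x = 1}) = (\<Sum>x\<in>{0..<P}. 2 * (if L x = 1 then 1 else 0))"
    unfolding c by (rule sum_distrib_left)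
  also have "\<dots> = (\<Sum>x\<in>{0..<P}. L x + (if x = 0 then 0 else 1))" by (rule sum.cong) (use pw in auto)
  also have "\<dots> = (\<Sum>x\<in>{0..<P}. L x) + (\<Sum>x\<in>{0..<P}. if x = 0 then 0 else 1)" by (rule sum.distrib)
  also have "(\<Sum>x\<in>{0..<P}. if x = 0 then 0 else (1::int)) = int (card {x\<in>{0..<P}. x \<noteq> 0})"
  proof -
    have "int (card {x\<in>{0..<P}. x \<noteq> 0}) = (\<Sum>x\<in>{0..<P}. if x \<noteq> 0 then 1 else 0)"
      by (rule card_int_sum) simp
    moreover have "(\<Sum>x\<in>{0..<P}. if x = 0 then 0 else (1::int)) = (\<Sum>x\<in>{0..<P}. if x \<noteq> 0 then 1 else 0)"
      by (rule sum.cong) auto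
    ultimately show ?thesis by simp
  qed
  also have "{x\<in>{0..<P}. x \<noteq> 0} = {1..<P}" by auto
  finally have "2 * int (card {x\<in>{0..<P}. L x = 1}) = int p - 1" using sum_L p_gt2 by simp
  then show ?thesis by linarith
qed

lemma sum_L_refl: "(\<Sum>x\<in>{0..<P}. L (j - x)) = 0"
proof -
  have "(\<Sum>x\<in>{0..<P}. L ((j - x) mod P)) = (\<Sum>x\<in>{0..<P}. L x)"
  proof (rule sum_perm)
    fix x y assume "x \<in> {0..<P}" "y \<in> {0..<P}" "[j - x = j - y] (mod P)"
    then show "x = y" using dvd_range[of x y] by (simp add: cong_iff_dvd_diff dvd_diff_commute)
  qed
  then show ?thesis using sum_L by (simp add: L_mod)
qed

definition iv :: "int \<Rightarrow> int" where "iv x = (SOME y. P dvd (x * y - 1))"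

lemma iv: "\<not> P dvd x \<Longrightarrow> P dvd (x * iv x - 1)"
proof -
  assume "\<not> P dvd x"
  then have "coprime x P" using P_prime prime_imp_coprime coprime_commute by blast
  then obtain y where "[x * y = 1] (mod P)" using cong_solve_coprime_int by blast
  then have "P dvd (x * y - 1)" by (simp add: cong_iff_dvd_diff)
  then show ?thesis unfolding iv_def by (rule someI)
qed

lemma T_sum:
  assumes j: "\<not> P dvd j"
  shows "(\<Sum>x\<in>{0..<P}. L (x * (j - x))) = 1"
proof -
  define \<phi> where "\<phi> x = (j * iv x - 1) mod P" for x
  have ndv: "\<not> P dvd x" if "x \<in> {1..<P}" for x using that by (auto simp: zdvd_not_zless)
  have Lphi: "L (x * (j - x)) = L (\<phi> x)" if "x \<in> {1..<P}" for x
  proof -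
    have d: "P dvd (x * iv x - 1)" using iv ndv[OF that] by blast
    have "x * x * (j * iv x - 1) - x * (j - x) = x * j * (x * iv x - 1)" by (simp add: algebra_simps)
    then have "P dvd (x * x * (j * iv x - 1) - x * (j - x))" using d by simp
    then have "L (x * (j - x)) = L (x * x * (j * iv x - 1))"
      by (intro L_cong) (simp add: cong_iff_dvd_diff dvd_diff_commute)
    also have "\<dots> = L (j * iv x - 1)" by (rule L_sq[OF ndv[OF that]])
    finally show ?thesis unfolding \<phi>_def by (simp add: L_mod)
  qed
  have inj: "inj_on \<phi> {1..<P}"
  proof (rule inj_onI)
    fix x y assume x: "x \<in> {1..<P}" and y: "y \<in> {1..<P}" and e: "\<phi> x = \<phi> y"
    have dx: "P dvd (x * iv x - 1)" using iv ndv[OF x] by blast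
    have dy: "P dvd (y * iv y - 1)" using iv ndv[OF y] by blast
    have "P dvd ((j * iv x - 1) - (j * iv y - 1))" using e unfolding \<phi>_def by (simp add: mod_eq_dvd_iff)
    then have d1: "P dvd (j * iv x - j * iv y)" by simp
    have "j * (y - x) = x * y * (j * iv x - j * iv y) - j * y * (x * iv x - 1) + j * x * (y * iv y - 1)"
      by (simp add: algebra_simps)
    also have "P dvd \<dots>" using d1 dx dy by simp
    finally have "P dvd j * (y - x)" .
    then have "P dvd (y - x)" using j prime_dvd_mult_iff[OF P_prime] by blast
    then show "x = y" using dvd_range[of y x] x y by auto
  qed
  have img: "\<phi> ` {1..<P} = {0..<P} - {P - 1}"
  proof (rule card_subset_eq)
    show "finite ({0..<P} - {P - 1})" by simp
    show "\<phi> ` {1..<P} \<subseteq> {0..<P} - {P - 1}"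
    proof
      fix z assume "z \<in> \<phi> ` {1..<P}"
      then obtain x where x: "x \<in> {1..<P}" "z = \<phi> x" by blast
      have "z \<noteq> P - 1"
      proof
        assume "z = P - 1"
        then have "(j * iv x - 1) mod P = (-1) mod P" using x p_gt2 unfolding \<phi>_def
          by (simp add: zmod_minus1)
        then have "P dvd (j * iv x)" by (simp add: mod_eq_dvd_iff)
        then have "P dvd iv x" using j prime_dvd_mult_iff[OF P_prime] by blast
        then have "P dvd x * iv x" by simp
        moreover have "P dvd (x * iv x - 1)" using iv ndv[OF x(1)] by blast
        ultimately have "P dvd (x * iv x - (x * iv x - 1))" by (rule dvd_diff)
        then have "P dvd 1" by simp
        then show False using p_gt2 by simp
      qed
      moreover have "z \<in> {0..<P}" using x p_gt2 unfolding \<phi>_def by simp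
      ultimately show "z \<in> {0..<P} - {P - 1}" by simp
    qed
    show "card (\<phi> ` {1..<P}) = card ({0..<P} - {P - 1})"
    proof -
      have "p > 0" using p_gt2 by simp
      then show ?thesis using card_image[OF inj] p_gt2 by simp
    qed
  qed
  have "(\<Sum>x\<in>{0..<P}. L (x * (j - x))) = (\<Sum>x\<in>insert 0 {1..<P}. L (x * (j - x)))"
    by (rule sum.cong) (use p_gt2 in auto)
  also have "\<dots> = (\<Sum>x\<in>{1..<P}. L (x * (j - x)))" by (simp add: L_zero)
  also have "\<dots> = (\<Sum>x\<in>{1..<P}. L (\<phi> x))" by (rule sum.cong) (use Lphi in auto)
  also have "\<dots> = (\<Sum>z\<in>\<phi> ` {1..<P}. L z)" by (simp add: sum.reindex[OF inj])
  also have "\<dots> = (\<Sum>z\<in>{0..<P} - {P - 1}. L z)" by (simp add: img)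
  also have "\<dots> = (\<Sum>z\<in>{0..<P}. L z) - L (P - 1)"
  proof -
    have "P - 1 \<in> {0..<P}" using p_gt2 by simp
    then show ?thesis by (subst sum_diff1) auto
  qed
  also have "L (P - 1) = L (-1)" by (rule L_cong) (simp add: cong_iff_dvd_diff)
  finally show ?thesis using sum_L L_neg1 by simp
qed

lemma corr_QR: "4 * card {x\<in>{0..<P}. L x = 1 \<and> L (j - x) = 1} \<le> p + 1"
proof (cases "P dvd j")
  case True
  have "{x\<in>{0..<P}. L x = 1 \<and> L (j - x) = 1} = {}"
  proof -
    have "L (j - x) = - L x" for x
    proof -
      have "L (j - x) = L (- x)" by (rule L_cong) (use True in \<open>simp add: cong_iff_dvd_diff\<close>)
      then show ?thesis by (simp add: L_neg)
    qed
    then show ?thesis by auto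
  qed
  then show ?thesis by (metis card.empty le0 mult_0_right)
next
  case False
  define jm where "jm = j mod P"
  have jm: "jm \<in> {0..<P}" "jm \<noteq> 0" using False p_gt2 unfolding jm_def by (auto simp: dvd_eq_mod_eq_0)
  have Ljm: "L jm = L j" unfolding jm_def by (rule L_mod)
  have pw: "(1 + L x) * (1 + L (j - x)) = 4 * (if L x = 1 \<and> L (j - x) = 1 then 1 else 0)
      + (if x = 0 then 1 + L j else 0) + (if x = jm then 1 + L j else 0)" if "x \<in> {0..<P}" for x
  proof -
    have "L (j - jm) = 0" unfolding jm_def L_zero by (simp add: minus_mod_eq_mult_div)
    moreover have "L 0 = 0" by (simp add: L_zero)
    moreover have "x \<noteq> 0 \<Longrightarrow> L x \<noteq> 0" using L_range_zero[OF that] by simp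
    moreover have "x \<noteq> jm \<Longrightarrow> L (j - x) \<noteq> 0"
    proof
      assume "x \<noteq> jm" "L (j - x) = 0"
      then have "P dvd (j - x)" using L_zero by simp
      then have "P dvd (jm - x)" unfolding jm_def by (simp add: mod_eq_dvd_iff[symmetric] mod_diff_left_eq)
      then show False using dvd_range[OF jm(1) that] \<open>x \<noteq> jm\<close> by simp
    qed
    ultimately show ?thesis using L_vals[of x] L_vals[of "j - x"] L_vals[of j] jm(2) Ljm
      by (cases "x = 0"; cases "x = jm") auto
  qed
  have "(\<Sum>x\<in>{0..<P}. (1 + L x) * (1 + L (j - x))) =
      (\<Sum>x\<in>{0..<P}. 1 + L x + L (j - x) + L (x * (j - x)))"
  proof (rule sum.cong)
    fix x :: int
    have "L (x * (j - x)) = L x * L (j - x)" by (rule L_mult)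
    then show "(1 + L x) * (1 + L (j - x)) = 1 + L x + L (j - x) + L (x * (j - x))"
      by (simp add: distrib_left distrib_right)
  qed simp
  also have "\<dots> = int p + 1"
    using sum_L sum_L_refl T_sum[OF False] by (simp add: sum.distrib)
  finally have s1: "(\<Sum>x\<in>{0..<P}. (1 + L x) * (1 + L (j - x))) = int p + 1" .
  have "(\<Sum>x\<in>{0..<P}. (1 + L x) * (1 + L (j - x))) =
      (\<Sum>x\<in>{0..<P}. 4 * (if L x = 1 \<and> L (j - x) = 1 then 1 else 0)
      + (if x = 0 then 1 + L j else 0) + (if x = jm then 1 + L j else 0))"
    by (rule sum.cong) (use pw in auto)
  also have "\<dots> = (\<Sum>x\<in>{0..<P}. 4 * (if L x = 1 \<and> L (j - x) = 1 then 1 else 0))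
      + (\<Sum>x\<in>{0..<P}. if x = 0 then 1 + L j else 0) + (\<Sum>x\<in>{0..<P}. if x = jm then 1 + L j else 0)"
    by (simp add: sum.distrib)
  also have "(\<Sum>x\<in>{0..<P}. 4 * (if L x = 1 \<and> L (j - x) = 1 then 1 else 0)) =
      4 * int (card {x\<in>{0..<P}. L x = 1 \<and> L (j - x) = 1})"
  proof -
    have "int (card {x\<in>{0..<P}. L x = 1 \<and> L (j - x) = 1}) = (\<Sum>x\<in>{0..<P}. if L x = 1 \<and> L (j - x) = 1 then 1 else 0)"
      by (rule card_int_sum) simp
    then show ?thesis by (simp add: sum_distrib_left)
  qed
  also have "(\<Sum>x\<in>{0..<P}. if x = 0 then 1 + L j else 0) = 1 + L j"
    using p_gt2 by (subst sum.delta) auto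
  also have "(\<Sum>x\<in>{0..<P}. if x = jm then 1 + L j else 0) = 1 + L j"
    using jm by (subst sum.delta) auto
  finally have "4 * int (card {x\<in>{0..<P}. L x = 1 \<and> L (j - x) = 1}) = int p + 1 - 2 * (1 + L j)"
    using s1 by simp
  moreover have "1 + L j \<ge> 0" using L_vals[of j] by auto
  ultimately have "int (4 * card {x\<in>{0..<P}. L x = 1 \<and> L (j - x) = 1}) \<le> int (p + 1)" by simp
  then show ?thesis by (simp only: of_nat_le_iff)
qed

end

lemma ex_factor3: "(n::nat) mod 4 = 3 \<Longrightarrow> \<exists>q. prime q \<and> q dvd n \<and> q mod 4 = 3"
proof (induction n rule: less_induct)
  case (less n)
  have "n \<noteq> 1" using less.prems by auto
  then obtain q where q: "prime q" "q dvd n" using prime_factor_nat by blast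
  show ?case
  proof (cases "q mod 4 = 3")
    case True
    then show ?thesis using q by blast
  next
    case False
    have "odd n" using less.prems by presburger
    then have "odd q" using q(2) by (meson dvd_trans)
    then have "q mod 4 = 1 \<or> q mod 4 = 3" by presburger
    then have q1: "q mod 4 = 1" using False by simp
    obtain n' where n': "n = q * n'" using q(2) by blast
    have "n mod 4 = ((q mod 4) * (n' mod 4)) mod 4" unfolding n' by (simp add: mod_mult_eq)
    then have "n' mod 4 = 3" using q1 less.prems by simp
    moreover have "n' < n"
    proof -
      have "n' \<noteq> 0" using \<open>n' mod 4 = 3\<close> by auto
      moreover have "q \<ge> 2" using q(1) prime_ge_2_nat by blast
      ultimately show ?thesis unfolding n' by simp
    qed
    ultimately obtain q' where "prime q'" "q' dvd n'" "q' mod 4 = 3" using less.IH by blast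
    then show ?thesis unfolding n' by auto
  qed
qed

lemma primes3_inf: "\<exists>p. prime p \<and> p mod 4 = 3 \<and> p > (n::nat)"
proof -
  define N where "N = 4 * fact n - (1::nat)"
  have f: "fact n \<ge> (1::nat)" by (simp add: fact_ge_1)
  have g: "\<And>F::nat. F \<ge> 1 \<Longrightarrow> 4 * F - 1 = 4 * (F - 1) + 3" by arith
  have "N = 4 * (fact n - 1) + 3" unfolding N_def using g[OF f] .
  then have "N mod 4 = 3" by simp
  then obtain q where q: "prime q" "q dvd N" "q mod 4 = 3" using ex_factor3 by blast
  have "q > n"
  proof (rule ccontr)
    assume "\<not> q > n"
    then have "q dvd fact n" using q(1) by (intro dvd_fact) (auto simp: prime_gt_0_nat Suc_leI)
    then have "q dvd 4 * fact n" by simp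
    then have "q dvd (4 * fact n - N)" using q(2) by (rule dvd_diff_nat)
    moreover have "4 * fact n - N = 1"
    proof -
      have "\<And>F::nat. F \<ge> 1 \<Longrightarrow> 4 * F - (4 * F - 1) = 1" by arith
      then show ?thesis unfolding N_def using f by blast
    qed
    ultimately show False using q(1) by simp
  qed
  then show ?thesis using q by blast
qed


lemma qr_pat:
  assumes "prime p" "p mod 4 = 3"
  shows "pat p (\<lambda>x. qrp.L p x = 1) ((p - 1) div 2) ((p + 1) div 4)"
proof -
  interpret qrp p by unfold_locales (use assms in auto)
  have "p > 0" using p_gt2 by simp
  moreover have "\<And>x. (L (x mod int p) = 1) = (L x = 1)" by (simp add: L_mod)
  moreover have "card {x\<in>{0..<int p}. L x = 1} = (p - 1) div 2" by (rule card_QR)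
  moreover have "card {x\<in>{0..<int p}. L x = 1 \<and> L (j - x) = 1} \<le> (p + 1) div 4" for j
    using corr_QR[of j] by (simp add: less_eq_div_iff_mult_less_eq mult.commute)
  ultimately show ?thesis unfolding pat_def by blast
qed

definition good :: "real \<Rightarrow> bool" where
  "good r \<longleftrightarrow> (\<forall>\<delta>>0. \<exists>m s K M. pat m s K M \<and> \<bar>real K / real m - r\<bar> < \<delta> \<and>
      real M / real m \<le> (real K / real m)^2 + \<delta>)"

lemma good_half: "good (1/2)"
  unfolding good_def
proof (intro allI impI)
  fix \<delta> :: real assume d: "\<delta> > 0"
  obtain p where p: "prime p" "p mod 4 = 3" "p > nat \<lceil>1/\<delta>\<rceil>" using primes3_inf by blast
  have pd: "real p * \<delta> > 1"
  proof -
    have "real p > 1/\<delta>" using p(3) by linarith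
    then show ?thesis using d by (simp add: field_simps)
  qed
  have p1: "real p \<ge> 1" using p(1) prime_ge_1_nat by simp
  have K: "real ((p - 1) div 2) = (real p - 1) / 2"
  proof -
    have "2 dvd (p - 1)" using p(2) by presburger
    then show ?thesis using p1 by (simp add: real_of_nat_div of_nat_diff)
  qed
  have M: "real ((p + 1) div 4) = (real p + 1) / 4"
  proof -
    have "4 dvd (p + 1)" using p(2) by presburger
    then show ?thesis by (simp add: real_of_nat_div)
  qed
  show "\<exists>m s K M. pat m s K M \<and> \<bar>real K / real m - 1/2\<bar> < \<delta> \<and> real M / real m \<le> (real K / real m)^2 + \<delta>"
  proof (intro exI conjI)
    show "pat p (\<lambda>x. qrp.L p x = 1) ((p - 1) div 2) ((p + 1) div 4)" by (rule qr_pat[OF p(1,2)])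
    have e1: "real ((p - 1) div 2) / real p - 1/2 = - 1 / (2 * real p)" unfolding K using p1 by (simp add: field_simps)
    have "1 / (2 * real p) < \<delta>" using pd p1 by (simp add: field_simps)
    then show "\<bar>real ((p - 1) div 2) / real p - 1/2\<bar> < \<delta>" unfolding e1 using p1 by simp
    have "(real p + 1) * real p \<le> (real p - 1)^2 + 4 * (real p)^2 * \<delta>"
    proof -
      have "4 * (real p)^2 * \<delta> = 4 * real p * (real p * \<delta>)" by (simp add: power2_eq_square)
      also have "\<dots> \<ge> 4 * real p * 1" using pd p1 by (intro mult_left_mono) auto
      finally have "4 * (real p)^2 * \<delta> \<ge> 4 * real p" by simp
      then show ?thesis by (simp add: power2_eq_square algebra_simps)
    qed
    then have "((real p + 1) * real p) / (4 * (real p)^2) \<le> ((real p - 1)^2 + 4 * (real p)^2 * \<delta>) / (4 * (real p)^2)"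
      by (rule divide_right_mono) simp
    moreover have "(real p + 1) / 4 / real p = ((real p + 1) * real p) / (4 * (real p)^2)"
      using p1 by (simp add: power2_eq_square)
    moreover have "((real p - 1) / 2 / real p)^2 + \<delta> = ((real p - 1)^2 + 4 * (real p)^2 * \<delta>) / (4 * (real p)^2)"
      using p1 by (simp add: power2_eq_square field_simps)
    ultimately have "(real p + 1) / 4 / real p \<le> ((real p - 1) / 2 / real p)^2 + \<delta>" by simp
    then show "real ((p + 1) div 4) / real p \<le> (real ((p - 1) div 2) / real p)^2 + \<delta>"
      unfolding K M .
  qed
qed

lemma good_0: "good 0"
  unfolding good_def
proof (intro allI impI)
  fix \<delta> :: real assume "\<delta> > 0"
  have "pat 1 (\<lambda>_. False) 0 0" unfolding pat_def by simp
  then show "\<exists>m s K M. pat m s K M \<and> \<bar>real K / real m - 0\<bar> < \<delta> \<and> real M / real m \<le> (real K / real m)^2 + \<delta>"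
    using \<open>\<delta> > 0\<close> by (intro exI[of _ 1] exI[of _ "\<lambda>_. False"] exI[of _ 0]) auto
qed

lemma good_1: "good 1"
  unfolding good_def
proof (intro allI impI)
  fix \<delta> :: real assume "\<delta> > 0"
  have e: "{x\<in>{0..<int 1}. True} = {0}" "\<And>j. {x\<in>{0..<int 1}. True \<and> True} = {0}" by auto
  have "pat 1 (\<lambda>_. True) 1 1" unfolding pat_def e by simp
  then show "\<exists>m s K M. pat m s K M \<and> \<bar>real K / real m - 1\<bar> < \<delta> \<and> real M / real m \<le> (real K / real m)^2 + \<delta>"
    using \<open>\<delta> > 0\<close> by (intro exI[of _ 1] exI[of _ "\<lambda>_. True"] exI[of _ 1]) auto
qed

lemma good_compl: "good r \<Longrightarrow> good (1 - r)"
  unfolding good_def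
proof (intro allI impI)
  fix \<delta> :: real assume g: "\<forall>\<delta>>0. \<exists>m s K M. pat m s K M \<and> \<bar>real K / real m - r\<bar> < \<delta> \<and>
      real M / real m \<le> (real K / real m)^2 + \<delta>" and d: "\<delta> > 0"
  then obtain m s K M where p: "pat m s K M" and a: "\<bar>real K / real m - r\<bar> < \<delta>"
    and b: "real M / real m \<le> (real K / real m)^2 + \<delta>" by blast
  have m: "m > 0" using p unfolding pat_def by simp
  have Km: "K \<le> m" by (rule pat_K_le[OF p])
  define \<rho> where "\<rho> = real K / real m"
  have r1: "real (m - K) / real m = 1 - \<rho>" unfolding \<rho>_def using Km m by (simp add: of_nat_diff field_simps)
  have r2: "real (m + M - 2 * K) / real m \<le> (1 - \<rho>)^2 + \<delta>"
  proof (cases "2 * K \<le> m + M")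
    case True
    then have "real (m + M - 2 * K) / real m = 1 + real M / real m - 2 * \<rho>"
      unfolding \<rho>_def using m by (simp add: of_nat_diff field_simps)
    also have "\<dots> \<le> 1 + (\<rho>^2 + \<delta>) - 2 * \<rho>" using b unfolding \<rho>_def by simp
    also have "\<dots> = (1 - \<rho>)^2 + \<delta>" by (simp add: power2_eq_square algebra_simps)
    finally show ?thesis .
  next
    case False
    then have "m + M - 2 * K = 0" by simp
    then show ?thesis using d by simp
  qed
  show "\<exists>m s K M. pat m s K M \<and> \<bar>real K / real m - (1 - r)\<bar> < \<delta> \<and> real M / real m \<le> (real K / real m)^2 + \<delta>"
  proof (intro exI conjI)
    show "pat m (\<lambda>x. \<not> s x) (m - K) (m + M - 2 * K)" by (rule pat_compl[OF p])
    show "\<bar>real (m - K) / real m - (1 - r)\<bar> < \<delta>" using a unfolding r1 \<rho>_def by simp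
    show "real (m + M - 2 * K) / real m \<le> (real (m - K) / real m)^2 + \<delta>" using r2 unfolding r1 .
  qed
qed

lemma good_mult:
  assumes g1: "good r1" and g2: "good r2" and r: "0 \<le> r1" "r1 \<le> 1" "0 \<le> r2" "r2 \<le> 1"
  shows "good (r1 * r2)"
  unfolding good_def
proof (intro allI impI)
  fix \<delta> :: real assume d: "\<delta> > 0"
  define e where "e = min 1 \<delta> / 4"
  have e: "e > 0" "e \<le> 1" "4 * e \<le> \<delta>" unfolding e_def using d by auto
  obtain m1 s1 K1 M1 where p1: "pat m1 s1 K1 M1" and a1: "\<bar>real K1 / real m1 - r1\<bar> < e"
    and b1: "real M1 / real m1 \<le> (real K1 / real m1)^2 + e" using g1 e unfolding good_def by blast
  obtain m2 s2 K2 M2 where p2: "pat m2 s2 K2 M2" and a2: "\<bar>real K2 / real m2 - r2\<bar> < e"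
    and b2: "real M2 / real m2 \<le> (real K2 / real m2)^2 + e" using g2 e unfolding good_def by blast
  define \<rho>1 where "\<rho>1 = real K1 / real m1"
  define \<rho>2 where "\<rho>2 = real K2 / real m2"
  have m1: "m1 > 0" using p1 unfolding pat_def by simp
  have m2: "m2 > 0" using p2 unfolding pat_def by simp
  have rho1: "0 \<le> \<rho>1" "\<rho>1 \<le> 1" unfolding \<rho>1_def using pat_K_le[OF p1] m1 by auto
  have rho2: "0 \<le> \<rho>2" "\<rho>2 \<le> 1" unfolding \<rho>2_def using pat_K_le[OF p2] m2 by auto
  have eqK: "real (K1 * K2) / real (m1 * m2) = \<rho>1 * \<rho>2" unfolding \<rho>1_def \<rho>2_def by simp
  have eqM: "real (M1 * M2) / real (m1 * m2) = (real M1 / real m1) * (real M2 / real m2)" by simp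
  show "\<exists>m s K M. pat m s K M \<and> \<bar>real K / real m - r1 * r2\<bar> < \<delta> \<and> real M / real m \<le> (real K / real m)^2 + \<delta>"
  proof (intro exI conjI)
    show "pat (m1 * m2) (\<lambda>x. s1 (x div int m2) \<and> s2 (x mod int m2)) (K1 * K2) (M1 * M2)"
      by (rule pat_prod[OF p1 p2])
    have "\<rho>1 * \<rho>2 - r1 * r2 = (\<rho>1 - r1) * \<rho>2 + r1 * (\<rho>2 - r2)" by (simp add: algebra_simps)
    then have "\<bar>\<rho>1 * \<rho>2 - r1 * r2\<bar> \<le> \<bar>\<rho>1 - r1\<bar> * \<rho>2 + r1 * \<bar>\<rho>2 - r2\<bar>"
      using rho2 r by (simp add: abs_mult) (metis abs_triangle_ineq abs_mult abs_of_nonneg)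
    also have "\<dots> \<le> e * 1 + 1 * e"
      using a1 a2 rho2 r unfolding \<rho>1_def[symmetric] \<rho>2_def[symmetric]
      by (intro add_mono mult_mono) auto
    finally show "\<bar>real (K1 * K2) / real (m1 * m2) - r1 * r2\<bar> < \<delta>" unfolding eqK using e by simp
    have "(real M1 / real m1) * (real M2 / real m2) \<le> (\<rho>1^2 + e) * (\<rho>2^2 + e)"
      using b1 b2 e(1) unfolding \<rho>1_def[symmetric] \<rho>2_def[symmetric]
      by (intro mult_mono) (auto intro: add_nonneg_nonneg)
    also have "\<dots> = (\<rho>1 * \<rho>2)^2 + e * (\<rho>1^2 + \<rho>2^2 + e)" by (simp add: power2_eq_square algebra_simps)
    also have "\<dots> \<le> (\<rho>1 * \<rho>2)^2 + e * 3"
    proof -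
      have "\<rho>1^2 \<le> 1" "\<rho>2^2 \<le> 1" using rho1 rho2 by (auto simp: power_le_one)
      then have "\<rho>1^2 + \<rho>2^2 + e \<le> 3" using e by simp
      then show ?thesis using e by (intro add_left_mono mult_left_mono) auto
    qed
    also have "\<dots> \<le> (\<rho>1 * \<rho>2)^2 + \<delta>" using e by simp
    finally show "real (M1 * M2) / real (m1 * m2) \<le> (real (K1 * K2) / real (m1 * m2))^2 + \<delta>"
      unfolding eqK eqM .
  qed
qed

lemma good_dyadic: "a \<le> 2^k \<Longrightarrow> good (real a / 2^k)"
proof (induction k arbitrary: a)
  case 0
  then have "a = 0 \<or> a = 1" by auto
  then show ?case using good_0 good_1 by auto
next
  case (Suc k)
  show ?case
  proof (cases "a \<le> 2^k")
    case True
    have "good ((1/2) * (real a / 2^k))"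
      using Suc.IH[OF True] True by (intro good_mult good_half) (auto simp: field_simps)
    then show ?thesis by (simp add: field_simps)
  next
    case False
    define b where "b = 2^(Suc k) - a"
    have b: "b \<le> 2^k" using False Suc.prems unfolding b_def by simp
    have g: "good ((1/2) * (real b / 2^k))"
      using Suc.IH[OF b] b by (intro good_mult good_half) (auto simp: field_simps)
    have "real a / 2^Suc k = 1 - (1/2) * (real b / 2^k)"
      using Suc.prems unfolding b_def by (simp add: of_nat_diff field_simps)
    then show ?thesis using good_compl[OF g] by simp
  qed
qed

lemma good_all:
  assumes r: "0 \<le> r" "r \<le> 1"
  shows "good r"
  unfolding good_def
proof (intro allI impI)
  fix \<delta> :: real assume d: "\<delta> > 0"
  obtain k :: nat where k: "1 / 2^k < \<delta>/2"
  proof -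
    obtain k :: nat where "(1/2)^k < \<delta>/2" using real_arch_pow_inv[of "\<delta>/2" "1/2"] d by auto
    then show thesis using that[of k] by (simp add: power_one_over)
  qed
  define a where "a = nat \<lfloor>r * 2^k\<rfloor>"
  have a1: "real a \<le> r * 2^k" unfolding a_def using r by simp
  have a2: "r * 2^k < real a + 1" unfolding a_def using r by linarith
  have ak: "a \<le> 2^k"
  proof -
    have "real a \<le> 2^k" using a1 r by (smt (verit) mult_left_le_one_le zero_le_power)
    then show ?thesis by (metis of_nat_le_iff of_nat_numeral of_nat_power)
  qed
  have close: "\<bar>real a / 2^k - r\<bar> < \<delta>/2"
  proof -
    have "\<bar>real a / 2^k - r\<bar> = \<bar>real a - r * 2^k\<bar> / 2^k" by (simp add: field_simps)
    also have "\<dots> \<le> 1 / 2^k" using a1 a2 by (intro divide_right_mono) auto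
    finally show ?thesis using k by simp
  qed
  have "good (real a / 2^k)" by (rule good_dyadic[OF ak])
  then obtain m s K M where p: "pat m s K M" and a: "\<bar>real K / real m - real a / 2^k\<bar> < \<delta>/2"
    and b: "real M / real m \<le> (real K / real m)^2 + \<delta>/2" unfolding good_def using d by (meson half_gt_zero)
  show "\<exists>m s K M. pat m s K M \<and> \<bar>real K / real m - r\<bar> < \<delta> \<and> real M / real m \<le> (real K / real m)^2 + \<delta>"
  proof -
    have x1: "\<bar>real K / real m - r\<bar> < \<delta>" using a close by linarith
    have x2: "real M / real m \<le> (real K / real m)^2 + \<delta>" using b d by linarith
    show ?thesis using p x1 x2 by blast
  qed
qed


lemma lin5: "(a::real) \<le> b + 2*c \<Longrightarrow> b \<le> d \<Longrightarrow> d \<le> f + \<delta> \<Longrightarrow> f \<le> g \<Longrightarrow> g \<le> h + 4*\<delta> \<Longrightarrow>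
   c \<le> 2*\<delta> \<Longrightarrow> a \<le> h + 9*\<delta>"
  by linarith

lemma key_claim:
  assumes e: "0 < e" "e \<le> 1" and r: "0 \<le> r" "r \<le> 1"
    and A: "A \<subseteq> {0..<1::real}" "A \<in> sets lebesgue" "measure lebesgue A = e"
  shows "Delta (r * e) \<le> r^2 * D A"
proof (rule field_le_epsilon)
  fix \<epsilon> :: real assume eps: "0 < \<epsilon>"
  define \<delta> where "\<delta> = min 1 \<epsilon> / 9"
  have d: "0 < \<delta>" "\<delta> \<le> 1" "9 * \<delta> \<le> \<epsilon>" unfolding \<delta>_def using eps by auto
  obtain m s K M where p: "pat m s K M" and a: "\<bar>real K / real m - r\<bar> < \<delta>"
    and b: "real M / real m \<le> (real K / real m)^2 + \<delta>"
    using good_all[OF r] d(1) unfolding good_def by blast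
  define \<rho> where "\<rho> = real K / real m"
  have m: "m > 0" using p unfolding pat_def by simp
  have rho: "0 \<le> \<rho>" "\<rho> \<le> 1" unfolding \<rho>_def using pat_K_le[OF p] m by auto
  obtain B where B: "B \<subseteq> A" "B \<in> sets lebesgue"
    "\<bar>measure lebesgue B - \<rho> * measure lebesgue A\<bar> \<le> \<delta>"
    "\<And>t. measure lebesgue (B \<inter> {x. t - x \<in> B}) \<le> (real M / real m) * measure lebesgue (A \<inter> {x. t - x \<in> A}) + \<delta>"
    using AL[OF A(1,2) p d(1)] unfolding \<rho>_def by blast
  have B01: "B \<subseteq> {0..<1}" using B(1) A(1) by auto
  define b where "b = measure lebesgue B"
  have b01: "0 \<le> b" "b \<le> 1" unfolding b_def using sub01_le1[OF B01 B(2)] by auto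
  have re01: "0 \<le> r * e" "r * e \<le> 1" using e r by (auto simp: mult_le_one)
  have "\<bar>\<rho> * e - r * e\<bar> = \<bar>\<rho> - r\<bar> * e" using e by (simp add: abs_mult left_diff_distrib[symmetric])
  also have "\<dots> \<le> \<delta> * 1" using a e unfolding \<rho>_def by (intro mult_mono) auto
  finally have "\<bar>\<rho> * e - r * e\<bar> \<le> \<delta>" by simp
  moreover have "\<bar>b - \<rho> * e\<bar> \<le> \<delta>" using B(3) A(3) unfolding b_def by simp
  ultimately have br: "\<bar>r * e - b\<bar> \<le> 2 * \<delta>" by linarith
  have h1: "Delta (r * e) \<le> Delta b + 2 * \<bar>r * e - b\<bar>" using Delta_lip_abs[OF re01 b01] by linarith
  have h2: "Delta b \<le> D B" unfolding b_def by (rule Delta_lower[OF B01 B(2) refl])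
  have h3: "D B \<le> (real M / real m) * D A + \<delta>"
  proof (rule D_least[OF B01 B(2)])
    fix t
    have "measure lebesgue (A \<inter> {x. t - x \<in> A}) \<le> D A" by (rule D_upper[OF A(1,2)])
    then have "(real M / real m) * measure lebesgue (A \<inter> {x. t - x \<in> A}) \<le> (real M / real m) * D A"
      by (rule mult_left_mono) simp
    then show "measure lebesgue (B \<inter> {x. t - x \<in> B}) \<le> (real M / real m) * D A + \<delta>"
      using B(4)[of t] by linarith
  qed
  have h4: "(real M / real m) * D A \<le> (r^2 + 4 * \<delta>) * D A"
  proof (rule mult_right_mono)
    have "\<rho> \<le> r + \<delta>" using a unfolding \<rho>_def by linarith
    then have "\<rho>^2 \<le> (r + \<delta>)^2" using rho by (intro power_mono) auto
    also have "\<dots> = r^2 + \<delta> * (2 * r + \<delta>)" by (simp add: power2_eq_square algebra_simps)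
    also have "\<dots> \<le> r^2 + \<delta> * 3" using r d by (intro add_left_mono mult_left_mono) auto
    finally show "real M / real m \<le> r^2 + 4 * \<delta>" using b unfolding \<rho>_def by linarith
    show "0 \<le> D A" by (rule D_nonneg[OF A(1,2)])
  qed
  have h5: "(r^2 + 4 * \<delta>) * D A \<le> r^2 * D A + 4 * \<delta>"
    using D_le1[OF A(1,2)] d by (simp add: distrib_right mult_left_le)
  have "Delta (r * e) \<le> r^2 * D A + 9 * \<delta>" by (rule lin5[OF h1 h2 h3 h4 h5 br])
  then show "Delta (r * e) \<le> r^2 * D A + \<epsilon>" using d by linarith
qed

lemma Delta_scale:
  assumes e: "0 < e" "e \<le> 1" and r: "0 \<le> r" "r \<le> 1"
  shows "Delta (r * e) \<le> r^2 * Delta e"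
proof (cases "r = 0")
  case True
  have "{0..<e} \<subseteq> {0..<1::real}" "{0..<e} \<in> sets lebesgue" "measure lebesgue {0..<e} = e"
    using e by auto
  from key_claim[OF e r this] show ?thesis using True by simp
next
  case False
  then have r0: "r^2 > 0" using r by simp
  have "Delta (r * e) / r^2 \<le> Delta e"
  proof (rule Delta_greatest)
    show "0 \<le> e" "e \<le> 1" using e by auto
    fix A assume "A \<subseteq> {0..<1::real}" "A \<in> sets lebesgue" "measure lebesgue A = e"
    from key_claim[OF e r this] show "Delta (r * e) / r^2 \<le> D A" using r0 by (simp add: field_simps)
  qed
  then show ?thesis using r0 by (simp add: field_simps)
qed

theorem theorem1p1:
  shows "(\<forall>x\<in>{0<..1}. \<forall>y\<in>{0<..1}. \<bar>Delta x - Delta y\<bar> \<le> 2 * \<bar>x - y\<bar>)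
    \<and> continuous_on {0<..1} Delta
    \<and> mono_on {0<..1} (\<lambda>\<epsilon>. Delta \<epsilon> / \<epsilon>\<^sup>2)
    \<and> (\<exists>L. ((\<lambda>\<epsilon>. Delta \<epsilon> / \<epsilon>\<^sup>2) \<longlongrightarrow> L) (at_right 0))"
proof (intro conjI)
  show lip: "\<forall>x\<in>{0<..1}. \<forall>y\<in>{0<..1}. \<bar>Delta x - Delta y\<bar> \<le> 2 * \<bar>x - y\<bar>"
    using Delta_lip_abs by auto
  show "continuous_on {0<..1} Delta"
    unfolding continuous_on_iff
  proof (intro ballI allI impI)
    fix x e assume x: "x \<in> {0<..1::real}" and e: "0 < (e::real)"
    show "\<exists>d>0. \<forall>x'\<in>{0<..1}. dist x' x < d \<longrightarrow> dist (Delta x') (Delta x) < e"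
    proof (intro exI[of _ "e/2"] conjI ballI impI)
      fix x' assume x': "x' \<in> {0<..1::real}" "dist x' x < e/2"
      have "\<bar>Delta x' - Delta x\<bar> \<le> 2 * \<bar>x' - x\<bar>" using lip x x' by blast
      then show "dist (Delta x') (Delta x) < e" using x'(2) by (simp add: dist_real_def)
    qed (use e in auto)
  qed
  define f where "f \<epsilon> = Delta \<epsilon> / \<epsilon>\<^sup>2" for \<epsilon> :: real
  have mono: "f x \<le> f y" if "x \<in> {0<..1}" "y \<in> {0<..1}" "x \<le> y" for x y
  proof -
    have xy: "0 < x" "0 < y" "y \<le> 1" "x / y \<le> 1" "0 \<le> x / y" using that by auto
    have "Delta ((x / y) * y) \<le> (x / y)^2 * Delta y" by (rule Delta_scale) (use xy in auto)
    then have "Delta x \<le> (x / y)^2 * Delta y" using xy by simp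
    then have "Delta x / x^2 \<le> (x / y)^2 * Delta y / x^2" using xy by (intro divide_right_mono) auto
    also have "\<dots> = Delta y / y^2" using xy by (simp add: field_simps power2_eq_square)
    finally show ?thesis unfolding f_def .
  qed
  show "mono_on {0<..1} (\<lambda>\<epsilon>. Delta \<epsilon> / \<epsilon>\<^sup>2)"
    by (rule mono_onI) (use mono in \<open>auto simp: f_def\<close>)
  have fnn: "0 \<le> f x" if "x \<in> {0<..1}" for x
    unfolding f_def using Delta_nonneg[of x] that by auto
  define L where "L = Inf (f ` {0<..1})"
  have bdd: "bdd_below (f ` {0<..1})" using fnn by (intro bdd_belowI[of _ 0]) auto
  have ne: "f ` {0<..1} \<noteq> {}" by auto
  have "(f \<longlongrightarrow> L) (at_right 0)"
  proof (rule order_tendstoI)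
    fix a assume "a < L"
    have "a < f x" if "x \<in> {0<..1}" for x
    proof -
      have "L \<le> f x" unfolding L_def using bdd that by (intro cInf_lower) auto
      then show ?thesis using \<open>a < L\<close> by simp
    qed
    then show "eventually (\<lambda>x. a < f x) (at_right 0)"
      unfolding eventually_at_right_field by (intro exI[of _ 1]) auto
  next
    fix b assume "L < b"
    then obtain y where y: "y \<in> f ` {0<..1}" "y < b" using cInf_less_iff[OF ne bdd] unfolding L_def by blast
    then obtain x0 where x0: "x0 \<in> {0<..1}" "f x0 < b" by blast
    show "eventually (\<lambda>x. f x < b) (at_right 0)"
      unfolding eventually_at_right_field
    proof (intro exI[of _ x0] conjI allI impI)
      show "0 < x0" using x0 by simp
      fix x :: real assume "0 < x" "x < x0"
      then have "f x \<le> f x0" using mono[of x x0] x0 by auto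
      then show "f x < b" using x0 by simp
    qed
  qed
  then show "\<exists>L. ((\<lambda>\<epsilon>. Delta \<epsilon> / \<epsilon>\<^sup>2) \<longlongrightarrow> L) (at_right 0)" unfolding f_def by blast
qed

end
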